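(* Let $f$ be $L$-smooth, bounded below by $f^*$, with unbiased stochastic gradients of variance at most $\sigma^2$ (see context). Consider Local SGD with parameter $B\in\mathbb{N}$ (see context) and its main branch $\{x^k\}_{k\ge0}$. With step size $\gamma=\min\{\frac{1}{2BL},\frac{\varepsilon}{4\sigma^2L}\}$ and $\Delta=f(x^0)-f^*$, we have $\frac1K\sum_{k=0}^{K-1}\mathbb{E}[\|\nabla f(x^k)\|^2]\le\varepsilon$ for all $K\ge\frac{4BL\Delta}{\varepsilon}+\frac{8\sigma^2L\Delta}{\varepsilon^2}$.
   Context: Assumptions: $f:\mathbb{R}^d\to\mathbb{R}$ is differentiable with $\|\nabla f(x)-\nabla f(y)\|\le L\|x-y\|$; $f(x)\ge f^*$ for all $x$; stochastic gradients $\nabla f(x;\xi)$, $\xi\sim\mathcal{D}_\xi$, satisfy $\mathbb{E}_\xi[\nabla f(x;\xi)]=\nabla f(x)$ and $\mathbb{E}_\xi\|\nabla f(x;\xi)-\nabla f(x)\|^2\le\sigma^2$. Local SGD with $n$ workers: in round $k=0,1,\dots$ the server broadcasts $w^k$ ($w^0$ given); each worker $i$ sets $z^{k,0}_i=w^k$ and repeatedly performs $z^{k,j+1}_i=z^{k,j}_i-\gamma\nabla f(z^{k,j}_i;\eta^{k,j}_i)$ with fresh i.i.d. samples $\eta^{k,j}_i\sim\mathcal{D}_\xi$, counting its completed local steps $M_i$. The server waits until $\sum_{i=1}^nM_i=B$, stops the workers, and sets $w^{k+1}=w^k-\gamma\sum_{i=1}^n\sum_{j=0}^{M_i-1}\nabla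 f(z^{k,j}_i;\eta^{k,j}_i)$. Main branch: $x^0=w^0$ and, in round $k$, starting from $x^{kB}=w^k$, the $B$ gradients of the round are applied one at a time (worker $1$'s gradients in order $j=0,\dots,M_1-1$, then worker 2's, ..., then worker $n$'s): $x^{t+1}=x^t-\gamma g_t$ where $g_t$ is the next gradient in this order; thus $x^{(k+1)B}=w^{k+1}$. *)

theory Defs
  imports "HOL-Probability.Probability"
begin

text \<open>Noise samples are indexed by (round k, worker i, local step j);
  a sample path is \<open>\<omega> :: nat \<times> nat \<times> nat \<Rightarrow> 'b\<close>, drawn from the i.i.d. product measure.
  Workers are numbered 0..n-1 (paper: 1..n). \<open>M k i\<close> is the number of local steps
  completed by worker i in round k.\<close>

primrec local_iter :: "('a::real_vector \<Rightarrow> 'b \<Rightarrow> 'a) \<Rightarrow> real \<Rightarrow> 'a \<Rightarrow> (nat \<Rightarrow> 'b) \<Rightarrow> nat \<Rightarrow> 'a" where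
  "local_iter g \<gamma> w eta 0 = w"
| "local_iter g \<gamma> w eta (Suc j) =
     local_iter g \<gamma> w eta j - \<gamma> *\<^sub>R g (local_iter g \<gamma> w eta j) (eta j)"

primrec server_iter :: "('a::real_vector \<Rightarrow> 'b \<Rightarrow> 'a) \<Rightarrow> real \<Rightarrow> nat \<Rightarrow> (nat \<Rightarrow> nat \<Rightarrow> nat)
    \<Rightarrow> 'a \<Rightarrow> (nat \<times> nat \<times> nat \<Rightarrow> 'b) \<Rightarrow> nat \<Rightarrow> 'a" where
  "server_iter g \<gamma> n M w0 \<omega> 0 = w0"
| "server_iter g \<gamma> n M w0 \<omega> (Suc k) =
     server_iter g \<gamma> n M w0 \<omega> k - \<gamma> *\<^sub>R (\<Sum>i<n. \<Sum>j<M k i.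
        g (local_iter g \<gamma> (server_iter g \<gamma> n M w0 \<omega> k) (\<lambda>l. \<omega> (k, i, l)) j) (\<omega> (k, i, j)))"

text \<open>Order in which the gradients of round k are applied on the main branch:
  worker 0's steps j = 0..M-1, then worker 1's, etc.\<close>
definition round_order :: "nat \<Rightarrow> (nat \<Rightarrow> nat \<Rightarrow> nat) \<Rightarrow> nat \<Rightarrow> (nat \<times> nat) list" where
  "round_order n M k = concat (map (\<lambda>i. map (\<lambda>j. (i, j)) [0..<M k i]) [0..<n])"

definition round_grad :: "('a::real_vector \<Rightarrow> 'b \<Rightarrow> 'a) \<Rightarrow> real \<Rightarrow> nat \<Rightarrow> (nat \<Rightarrow> nat \<Rightarrow> nat)
    \<Rightarrow> 'a \<Rightarrow> (nat \<times> nat \<times> nat \<Rightarrow> 'b) \<Rightarrow> nat \<Rightarrow> nat \<Rightarrow> 'a" where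
  "round_grad g \<gamma> n M w0 \<omega> k r =
     (let i = fst (round_order n M k ! r); j = snd (round_order n M k ! r) in
      g (local_iter g \<gamma> (server_iter g \<gamma> n M w0 \<omega> k) (\<lambda>l. \<omega> (k, i, l)) j) (\<omega> (k, i, j)))"

text \<open>Main branch inside round k: x^{kB} = w^k, x^{kB+r+1} = x^{kB+r} - gamma g_{kB+r}.\<close>
primrec round_partial :: "('a::real_vector \<Rightarrow> 'b \<Rightarrow> 'a) \<Rightarrow> real \<Rightarrow> nat \<Rightarrow> (nat \<Rightarrow> nat \<Rightarrow> nat)
    \<Rightarrow> 'a \<Rightarrow> (nat \<times> nat \<times> nat \<Rightarrow> 'b) \<Rightarrow> nat \<Rightarrow> nat \<Rightarrow> 'a" where
  "round_partial g \<gamma> n M w0 \<omega> k 0 = server_iter g \<gamma> n M w0 \<omega> k"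
| "round_partial g \<gamma> n M w0 \<omega> k (Suc r) =
     round_partial g \<gamma> n M w0 \<omega> k r - \<gamma> *\<^sub>R round_grad g \<gamma> n M w0 \<omega> k r"

definition main_branch :: "('a::real_vector \<Rightarrow> 'b \<Rightarrow> 'a) \<Rightarrow> real \<Rightarrow> nat \<Rightarrow> (nat \<Rightarrow> nat \<Rightarrow> nat)
    \<Rightarrow> nat \<Rightarrow> 'a \<Rightarrow> (nat \<times> nat \<times> nat \<Rightarrow> 'b) \<Rightarrow> nat \<Rightarrow> 'a" where
  "main_branch g \<gamma> n M B w0 \<omega> t = round_partial g \<gamma> n M w0 \<omega> (t div B) (t mod B)"

text \<open>Step size min{1/(2BL), eps/(4 sigma^2 L)}, with the convention that the second
  term is +infinity when sigma = 0.\<close>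
definition lsgd_stepsize :: "nat \<Rightarrow> real \<Rightarrow> real \<Rightarrow> real \<Rightarrow> real" where
  "lsgd_stepsize B L \<sigma> \<epsilon> =
     (if \<sigma>\<^sup>2 = 0 then 1 / (2 * real B * L) else min (1 / (2 * real B * L)) (\<epsilon> / (4 * \<sigma>\<^sup>2 * L)))"

end

theory Submission
  imports Defs
begin

lemma descent_lemma:
  fixes f :: "'a::euclidean_space \<Rightarrow> real" and df :: "'a \<Rightarrow> 'a"
  assumes diff: "\<forall>x. (f has_derivative (\<lambda>h. df x \<bullet> h)) (at x)"
    and smooth: "\<forall>x y. norm (df x - df y) \<le> L * norm (x - y)"
  shows "f y \<le> f x + df x \<bullet> (y - x) + L / 2 * (norm (y - x))\<^sup>2"
proof -
  define h where "h = y - x"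
  define \<phi> where "\<phi> s = f (x + s *\<^sub>R h) - s * (df x \<bullet> h) - L / 2 * s\<^sup>2 * (norm h)\<^sup>2" for s :: real
  define \<phi>' where "\<phi>' s = df (x + s *\<^sub>R h) \<bullet> h - df x \<bullet> h - L * s * (norm h)\<^sup>2" for s :: real
  have D: "(\<phi> has_real_derivative \<phi>' s) (at s)" for s
  proof -
    have d1: "((\<lambda>s. x + s *\<^sub>R h) has_derivative (\<lambda>t. t *\<^sub>R h)) (at s)"
      by (auto intro!: derivative_eq_intros)
    have d2: "((\<lambda>s. f (x + s *\<^sub>R h)) has_derivative (\<lambda>t. df (x + s *\<^sub>R h) \<bullet> (t *\<^sub>R h))) (at s)"
      using diff_chain_at[OF d1 diff[rule_format, of "x + s *\<^sub>R h"]] by (simp add: o_def)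
    have d2': "((\<lambda>s. f (x + s *\<^sub>R h)) has_real_derivative (df (x + s *\<^sub>R h) \<bullet> h)) (at s)"
    proof -
      have "(\<lambda>t. t * (df (x + s *\<^sub>R h) \<bullet> h)) = (*) (df (x + s *\<^sub>R h) \<bullet> h)"
        by (auto simp: fun_eq_iff mult.commute)
      then show ?thesis using d2 by (simp add: has_field_derivative_def)
    qed
    show ?thesis unfolding \<phi>_def \<phi>'_def
      by (auto intro!: derivative_eq_intros d2')
  qed
  have nonpos: "\<phi>' s \<le> 0" if "0 \<le> s" for s
  proof -
    have "df (x + s *\<^sub>R h) \<bullet> h - df x \<bullet> h = (df (x + s *\<^sub>R h) - df x) \<bullet> h"
      by (simp add: inner_diff_left)
    also have "\<dots> \<le> norm (df (x + s *\<^sub>R h) - df x) * norm h"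
      by (rule norm_cauchy_schwarz)
    also have "\<dots> \<le> L * norm (s *\<^sub>R h) * norm h"
      using smooth[rule_format, of "x + s *\<^sub>R h" x] by (simp add: mult_right_mono)
    also have "\<dots> = L * s * (norm h)\<^sup>2"
      using that by (simp add: power2_eq_square)
    finally show ?thesis unfolding \<phi>'_def by simp
  qed
  obtain c where c: "0 < c" "c < 1" "\<phi> 1 - \<phi> 0 = (1 - 0) * \<phi>' c"
    using MVT2[of 0 1 \<phi> \<phi>'] D by auto
  have "\<phi> 1 \<le> \<phi> 0" using c nonpos[of c] by simp
  then show ?thesis unfolding \<phi>_def h_def by (simp add: algebra_simps)
qed

definition stt :: "(nat \<Rightarrow> nat \<Rightarrow> nat) \<Rightarrow> nat \<Rightarrow> nat \<Rightarrow> nat" where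
  "stt M k i = (\<Sum>i'<i. M k i')"

lemma ro_Suc: "round_order (Suc n) M k = round_order n M k @ map (\<lambda>j. (n, j)) [0..<M k n]"
  by (simp add: round_order_def)

lemma ro_len: "length (round_order n M k) = (\<Sum>i<n. M k i)"
  by (induction n) (auto simp: ro_Suc round_order_def)

lemma ro_nth:
  assumes "r < (\<Sum>i<n. M k i)"
  shows "fst (round_order n M k ! r) < n \<and> snd (round_order n M k ! r) < M k (fst (round_order n M k ! r))
     \<and> stt M k (fst (round_order n M k ! r)) + snd (round_order n M k ! r) = r"
  using assms
proof (induction n)
  case 0 then show ?case by simp
next
  case (Suc n)
  show ?case
  proof (cases "r < (\<Sum>i<n. M k i)")
    case True
    then show ?thesis using Suc.IH by (simp add: ro_Suc nth_append ro_len)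
  next
    case False
    then show ?thesis using Suc.prems by (simp add: ro_Suc nth_append ro_len stt_def)
  qed
qed

lemma stt_mono: "i \<le> i' \<Longrightarrow> stt M k i \<le> stt M k i'"
  unfolding stt_def by (rule sum_mono2) auto

lemma stt_Suc: "stt M k (Suc i) = stt M k i + M k i"
  by (simp add: stt_def)

lemma stt_uniq:
  assumes "j < M k i" "j' < M k i'" "stt M k i + j = stt M k i' + j'"
  shows "i = i' \<and> j = j'"
proof -
  have "\<not> i < i'" if "j < M k i" "stt M k i + j = stt M k i' + j'" for i i' j j'
  proof
    assume "i < i'"
    then have "stt M k (Suc i) \<le> stt M k i'" by (intro stt_mono) simp
    then show False using that by (simp add: stt_Suc)
  qed
  then have "i = i'" using assms by (metis linorder_neqE_nat)
  then show ?thesis using assms by simp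
qed

lemma stt_le: "i < n \<Longrightarrow> stt M k i + M k i \<le> (\<Sum>i<n. M k i)"
  using stt_mono[of "Suc i" n M k] by (simp add: stt_Suc stt_def)

lemma ro_nth2:
  assumes "i < n" "j < M k i"
  shows "round_order n M k ! (stt M k i + j) = (i, j)"
proof -
  let ?r = "stt M k i + j"
  have r: "?r < (\<Sum>i<n. M k i)" using stt_le[OF assms(1), of M k] assms(2) by simp
  from ro_nth[where r="?r" and n=n and M=M and k=k, OF r] stt_uniq[of "snd (round_order n M k ! ?r)" M k "fst (round_order n M k ! ?r)" j i] assms
  show ?thesis by (metis prod.collapse)
qed

lemma sum_lessThan_add_split:
  fixes F :: "nat \<Rightarrow> 'z::comm_monoid_add"
  shows "(\<Sum>r < a + b. F r) = (\<Sum>r < a. F r) + (\<Sum>r < b. F (a + r))"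
  by (induction b) (auto simp: add.assoc)

lemma ro_sum: "(\<Sum>r < (\<Sum>i<n. M k i). F (round_order n M k ! r)) = (\<Sum>i<n. \<Sum>j<M k i. F (i, j))"
proof (induction n)
  case 0 then show ?case by simp
next
  case (Suc n)
  let ?a = "\<Sum>i<n. M k i"
  have "(\<Sum>r < (\<Sum>i<Suc n. M k i). F (round_order (Suc n) M k ! r))
      = (\<Sum>r < ?a + M k n. F (round_order (Suc n) M k ! r))" by simp
  also have "\<dots> = (\<Sum>r < ?a. F (round_order (Suc n) M k ! r)) + (\<Sum>r < M k n. F (round_order (Suc n) M k ! (?a + r)))"
    by (rule sum_lessThan_add_split)
  also have "(\<Sum>r < ?a. F (round_order (Suc n) M k ! r)) = (\<Sum>r < ?a. F (round_order n M k ! r))"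
    by (intro sum.cong) (auto simp: ro_Suc nth_append ro_len)
  also have "(\<Sum>r < M k n. F (round_order (Suc n) M k ! (?a + r))) = (\<Sum>j < M k n. F (n, j))"
    by (intro sum.cong) (auto simp: ro_Suc nth_append ro_len)
  finally show ?case using Suc.IH by simp
qed

lemma coord:
  fixes D :: "'b measure" and i0 :: 'i and h :: "('i \<Rightarrow> 'b) \<Rightarrow> 'b \<Rightarrow> ennreal"
  assumes D: "prob_space D"
    and hm: "(\<lambda>p. h (snd p) (fst p)) \<in> borel_measurable (D \<Otimes>\<^sub>M PiM UNIV (\<lambda>_. D))"
    and inv: "\<And>\<omega> c. h (fun_upd \<omega> i0 c) = h \<omega>"
  shows "(\<integral>\<^sup>+\<omega>. h \<omega> (\<omega> i0) \<partial>PiM UNIV (\<lambda>_. D)) = (\<integral>\<^sup>+\<omega>. (\<integral>\<^sup>+\<xi>. h \<omega> \<xi> \<partial>D) \<partial>PiM UNIV (\<lambda>_. D))"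
proof -
  let ?\<Omega> = "PiM (UNIV :: 'i set) (\<lambda>_. D)"
  interpret D: prob_space D by fact
  interpret \<Omega>: prob_space ?\<Omega> by (intro prob_space_PiM D)
  interpret P: pair_sigma_finite D ?\<Omega> by unfold_locales
  have dist: "distr (D \<Otimes>\<^sub>M ?\<Omega>) ?\<Omega> (\<lambda>(x, X). X(i0 := x)) = ?\<Omega>"
    using distr_pair_PiM_eq_PiM[of UNIV "\<lambda>_. D" i0] D by simp
  have \<phi>m: "(\<lambda>(x, X). X(i0 := x)) \<in> measurable (D \<Otimes>\<^sub>M ?\<Omega>) ?\<Omega>"
  proof (rule measurable_PiM_single')
    fix i :: 'i
    show "(\<lambda>p. ((\<lambda>(x, X). X(i0 := x)) p) i) \<in> measurable (D \<Otimes>\<^sub>M ?\<Omega>) D"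
    proof (cases "i = i0")
      case True then show ?thesis by (simp add: split_beta)
    next
      case False then show ?thesis by (simp add: split_beta)
    qed
  next
    show "(\<lambda>(x, X). X(i0 := x)) \<in> space (D \<Otimes>\<^sub>M ?\<Omega>) \<rightarrow> (\<Pi>\<^sub>E i\<in>UNIV. space D)"
      by (auto simp: space_pair_measure space_PiM PiE_iff)
  qed
  have pm: "(\<lambda>\<omega>. (\<omega> i0, \<omega>)) \<in> measurable ?\<Omega> (D \<Otimes>\<^sub>M ?\<Omega>)"
    by measurable
  have Hm: "(\<lambda>\<omega>. h \<omega> (\<omega> i0)) \<in> borel_measurable ?\<Omega>"
    using measurable_compose[OF pm hm] by simp
  have "(\<integral>\<^sup>+\<omega>. h \<omega> (\<omega> i0) \<partial>?\<Omega>) = (\<integral>\<^sup>+\<omega>. h \<omega> (\<omega> i0) \<partial>distr (D \<Otimes>\<^sub>M ?\<Omega>) ?\<Omega> (\<lambda>(x, X). X(i0 := x)))"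
    by (simp add: dist)
  also have "\<dots> = (\<integral>\<^sup>+p. h ((\<lambda>(x, X). X(i0 := x)) p) (((\<lambda>(x, X). X(i0 := x)) p) i0) \<partial>(D \<Otimes>\<^sub>M ?\<Omega>))"
    using nn_integral_distr[OF \<phi>m, of "\<lambda>\<omega>. h \<omega> (\<omega> i0)"] Hm by simp
  also have "\<dots> = (\<integral>\<^sup>+p. h (snd p) (fst p) \<partial>(D \<Otimes>\<^sub>M ?\<Omega>))"
    by (intro nn_integral_cong) (auto simp: inv split: prod.splits)
  also have "\<dots> = (\<integral>\<^sup>+X. (\<integral>\<^sup>+x. h X x \<partial>D) \<partial>?\<Omega>)"
    using P.nn_integral_snd[OF hm] by simp
  finally show ?thesis .
qed

lemma comb:
  fixes X Y Z N \<Delta> p q \<alpha> :: real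
  assumes a0: "0 \<le> \<alpha>" and a1: "\<alpha> \<le> 1" and Y0: "0 \<le> Y"
    and i: "X + (1 - q) * Y \<le> 2 * \<Delta> + Z + N"
    and ii: "X \<le> 2 * Y + 2 * Z"
    and iii: "Z \<le> 2 * p\<^sup>2 * Y + 2 * p * N"
    and cY: "- \<alpha> * (1 - q) + 2 * (1 - \<alpha>) + 2 * (2 - \<alpha>) * p\<^sup>2 \<le> 0"
  shows "X \<le> 2 * \<alpha> * \<Delta> + \<alpha> * N + 2 * (2 - \<alpha>) * p * N"
proof -
  have A1: "\<alpha> * (X + (1 - q) * Y) \<le> \<alpha> * (2 * \<Delta> + Z + N)" using i a0 by (rule mult_left_mono)
  have A2: "(1 - \<alpha>) * X \<le> (1 - \<alpha>) * (2 * Y + 2 * Z)" using ii a1 by (intro mult_left_mono) auto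
  have A3: "(2 - \<alpha>) * Z \<le> (2 - \<alpha>) * (2 * p\<^sup>2 * Y + 2 * p * N)" using iii a1 by (intro mult_left_mono) auto
  have A4: "(- \<alpha> * (1 - q) + 2 * (1 - \<alpha>) + 2 * (2 - \<alpha>) * p\<^sup>2) * Y \<le> 0"
    using cY Y0 by (rule mult_nonpos_nonneg)
  have eq: "X - (2 * \<alpha> * \<Delta> + \<alpha> * N + 2 * (2 - \<alpha>) * p * N)
    = (\<alpha> * (X + (1 - q) * Y) - \<alpha> * (2 * \<Delta> + Z + N)) + ((1 - \<alpha>) * X - (1 - \<alpha>) * (2 * Y + 2 * Z))
      + ((2 - \<alpha>) * Z - (2 - \<alpha>) * (2 * p\<^sup>2 * Y + 2 * p * N))
      + (- \<alpha> * (1 - q) + 2 * (1 - \<alpha>) + 2 * (2 - \<alpha>) * p\<^sup>2) * Y"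
    by (simp add: algebra_simps)
  have "X - (2 * \<alpha> * \<Delta> + \<alpha> * N + 2 * (2 - \<alpha>) * p * N) \<le> 0"
    unfolding eq using A1 A2 A3 A4 by linarith
  then show ?thesis by simp
qed

lemma cY1: fixes P Q q :: real assumes "P \<le> 1/4 - q + Q" "Q \<le> q/2" "0 \<le> q"
  shows "- (7/8) * (1 - q) + 2 * (1 - 7/8) + 2 * (2 - 7/8) * P \<le> 0"
  using assms by (simp add: field_simps)

lemma cY2: fixes P p q :: real assumes "P \<le> p/4" "p + q \<le> 1/4" "0 \<le> p" "0 \<le> q"
  shows "- (3/4) * (1 - q) + 2 * (1 - 3/4) + 2 * (2 - 3/4) * P \<le> 0"
  using assms by (simp add: field_simps)

lemma lin1: fixes Y u U :: real assumes "Y \<le> 7/32 + u + 9/8 * U" "0 \<le> - U + 3/4 * u - 1/8" "1/4 \<le> u"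
  shows "7/8 + Y \<le> 2 * u + 1" using assms by linarith

lemma lin2: fixes Y u U :: real assumes "Y \<le> 3/16 + u + 5/4 * U" "0 \<le> u / 4 - U" "0 \<le> u"
  shows "3/4 + Y \<le> 2 * u + 1" using assms by linarith

lemma poly1: fixes u Y :: real
  assumes "Y \<le> (7/32 + 9 * u / 16) * (2 * u + 1)" "0 \<le> (u - 1/4) * (1/2 - u)" "1/4 \<le> u"
  shows "7/8 + Y \<le> 2 * u + 1"
proof -
  have e1: "(7/32 + 9 * u / 16) * (2 * u + 1) = 7/32 + u + 9/8 * (u * u)" by (simp add: field_simps)
  have e2: "(u - 1/4) * (1/2 - u) = - (u * u) + 3/4 * u - 1/8" by (simp add: algebra_simps)
  have a1: "Y \<le> 7/32 + u + 9/8 * (u * u)" using assms(1) unfolding e1 .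
  have a2: "0 \<le> - (u * u) + 3/4 * u - 1/8" using assms(2) unfolding e2 .
  show ?thesis using lin1[OF a1 a2 assms(3)] .
qed

lemma poly2: fixes u Y :: real
  assumes "Y \<le> (3/16 + 5 * u / 8) * (2 * u + 1)" "0 \<le> u * (1/4 - u)" "0 \<le> u"
  shows "3/4 + Y \<le> 2 * u + 1"
proof -
  have e1: "(3/16 + 5 * u / 8) * (2 * u + 1) = 3/16 + u + 5/4 * (u * u)" by (simp add: field_simps)
  have e2: "u * (1/4 - u) = u / 4 - u * u" by (simp add: algebra_simps)
  have a1: "Y \<le> 3/16 + u + 5/4 * (u * u)" using assms(1) unfolding e1 .
  have a2: "0 \<le> u / 4 - u * u" using assms(2) unfolding e2 .
  show ?thesis using lin2[OF a1 a2 assms(3)] .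
qed

lemma core_alg:
  fixes X Y Z N \<Delta> Tt u v p q :: real
  assumes Y0: "0 \<le> Y" and D0: "0 \<le> \<Delta>" and T0: "0 \<le> Tt"
    and p0: "0 \<le> p" and q0: "0 \<le> q" and pq: "p + q = u" and u2: "u \<le> 1/2"
    and v0: "0 \<le> v" and v4: "v \<le> 1/4" and uv: "u = 1/2 \<or> v = 1/4"
    and NN: "N = v * Tt"
    and i: "X + (1 - q) * Y \<le> 2 * \<Delta> + Z + N"
    and ii: "X \<le> 2 * Y + 2 * Z"
    and iii: "Z \<le> 2 * p\<^sup>2 * Y + 2 * p * N"
    and K: "2 * \<Delta> * (2 * u + 4 * v) \<le> Tt"
  shows "X \<le> Tt"
proof -
  define W where "W = 2 * u + 4 * v"
  have W1: "1 \<le> W" using uv v0 p0 q0 pq unfolding W_def by auto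
  have main: "X \<le> Tt" if a0: "0 \<le> \<alpha>" and a1: "\<alpha> \<le> 1"
    and cY: "- \<alpha> * (1 - q) + 2 * (1 - \<alpha>) + 2 * (2 - \<alpha>) * p\<^sup>2 \<le> 0"
    and poly: "\<alpha> + (\<alpha> * v + 2 * (2 - \<alpha>) * p * v) * W \<le> W" for \<alpha>
  proof -
    have hX: "X \<le> 2 * \<alpha> * \<Delta> + (\<alpha> * v + 2 * (2 - \<alpha>) * p * v) * Tt"
      using comb[OF a0 a1 Y0 i ii iii cY] unfolding NN by (simp add: algebra_simps)
    have "W * X \<le> W * (2 * \<alpha> * \<Delta> + (\<alpha> * v + 2 * (2 - \<alpha>) * p * v) * Tt)"
      using hX W1 by (intro mult_left_mono) auto
    also have "\<dots> = \<alpha> * (2 * \<Delta> * W) + (\<alpha> * v + 2 * (2 - \<alpha>) * p * v) * W * Tt"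
      by (simp add: algebra_simps)
    also have "\<dots> \<le> \<alpha> * Tt + (\<alpha> * v + 2 * (2 - \<alpha>) * p * v) * W * Tt"
      using K a0 unfolding W_def by (intro add_right_mono mult_left_mono) auto
    also have "\<dots> = (\<alpha> + (\<alpha> * v + 2 * (2 - \<alpha>) * p * v) * W) * Tt" by (simp add: algebra_simps)
    also have "\<dots> \<le> W * Tt" using poly T0 by (intro mult_right_mono) auto
    finally have "W * X \<le> W * Tt" .
    then show ?thesis using W1 by simp
  qed
  show ?thesis
  proof (cases "1/4 \<le> u")
    case True
    have pq2: "p \<le> 1/2 - q" using pq u2 by simp
    have "p\<^sup>2 \<le> (1/2 - q)\<^sup>2" using p0 pq2 by (intro power_mono) auto
    moreover have "q * q \<le> q * (1/2)"
      using q0 pq u2 p0 by (intro mult_left_mono) auto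
    moreover have "(1/2 - q)\<^sup>2 = 1/4 - q + q * q" by (simp add: power2_eq_square algebra_simps)
    ultimately have hp: "p\<^sup>2 \<le> 1/4 - q + q * q" by linarith
    have hq: "q * q \<le> q * (1/2)" using q0 pq u2 p0 by (intro mult_left_mono) auto
    have cY: "- (7/8) * (1 - q) + 2 * (1 - 7/8) + 2 * (2 - 7/8) * p\<^sup>2 \<le> (0::real)"
      by (rule cY1[OF hp _ q0]) (use hq in simp)
    show ?thesis
    proof (rule main[of "7/8"])
      show "- (7/8) * (1 - q) + 2 * (1 - 7/8) + 2 * (2 - 7/8) * p\<^sup>2 \<le> (0::real)" by (rule cY)
      show "7/8 + (7/8 * v + 2 * (2 - 7/8) * p * v) * W \<le> W"
      proof (cases "u = 1/2")
        case True
        have W: "W = 1 + 4 * v" unfolding W_def True by simp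
        have "p * v \<le> (1/2) * v" using pq True q0 v0 by (intro mult_right_mono) auto
        then have "7/8 * v + 2 * (2 - 7/8) * p * v \<le> 2 * v" by simp
        then have "(7/8 * v + 2 * (2 - 7/8) * p * v) * W \<le> 2 * v * W" using W W1 by (intro mult_right_mono) auto
        moreover have "2 * v * W \<le> 4 * v"
        proof -
          have "v * v \<le> v * (1/4)" using v0 v4 by (intro mult_left_mono) auto
          then show ?thesis unfolding W by (simp add: algebra_simps)
        qed
        ultimately show ?thesis unfolding W by simp
      next
        case False
        then have v: "v = 1/4" using uv by simp
        have W: "W = 2 * u + 1" unfolding W_def v by simp
        have "p \<le> u" using pq q0 by simp
        then have "7/8 * v + 2 * (2 - 7/8) * p * v \<le> 7/32 + 9 * u / 16" unfolding v by simp
        then have "(7/8 * v + 2 * (2 - 7/8) * p * v) * W \<le> (7/32 + 9 * u / 16) * W"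
          using W1 by (intro mult_right_mono) auto
        moreover have "(u - 1/4) * (1/2 - u) \<ge> 0" using \<open>1/4 \<le> u\<close> u2 by simp
        ultimately show ?thesis unfolding W using poly1 \<open>1/4 \<le> u\<close> by simp
      qed
    qed auto
  next
    case False
    then have v: "v = 1/4" using uv by auto
    have W: "W = 2 * u + 1" unfolding W_def v by simp
    have pl: "p < 1/4" using False pq q0 by simp
    have "p * p \<le> p * (1/4)" using p0 pl by (intro mult_left_mono) auto
    then have cY: "- (3/4) * (1 - q) + 2 * (1 - 3/4) + 2 * (2 - 3/4) * p\<^sup>2 \<le> (0::real)"
      using pq False p0 q0 by (intro cY2) (auto simp: power2_eq_square)
    show ?thesis
    proof (rule main[of "3/4"])
      show "- (3/4) * (1 - q) + 2 * (1 - 3/4) + 2 * (2 - 3/4) * p\<^sup>2 \<le> (0::real)" by (rule cY)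
      have "p \<le> u" using pq q0 by simp
      then have "3/4 * v + 2 * (2 - 3/4) * p * v \<le> 3/16 + 5 * u / 8" unfolding v by simp
      then have "(3/4 * v + 2 * (2 - 3/4) * p * v) * W \<le> (3/16 + 5 * u / 8) * W"
        using W1 by (intro mult_right_mono) auto
      moreover have "u * (1/4 - u) \<ge> 0" using False p0 q0 pq by simp
      moreover have "0 \<le> u" using p0 q0 pq by simp
      ultimately show "3/4 + (3/4 * v + 2 * (2 - 3/4) * p * v) * W \<le> W"
        unfolding W using poly2 by simp
    qed auto
  qed
qed

lemma comb_sum:
  fixes b :: "nat \<Rightarrow> real" and B :: nat
  assumes b0: "\<And>t. 0 \<le> b t" and B: "0 < B"
  shows "(\<Sum>t<K. \<Sum>r<t mod B. b (t div B * B + r)) \<le> (real B - 1) * (\<Sum>t<K. b t)"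
proof -
  define R where "R t s \<longleftrightarrow> t div B * B \<le> s \<and> s < t" for t s :: nat
  have 1: "(\<Sum>r<t mod B. b (t div B * B + r)) = (\<Sum>s\<in>{s. s \<in> {..<K} \<and> R t s}. b s)" if t: "t < K" for t
  proof -
    have "{s. s \<in> {..<K} \<and> R t s} = (\<lambda>r. t div B * B + r) ` {..<t mod B}"
    proof (intro set_eqI iffI)
      fix s assume "s \<in> {s. s \<in> {..<K} \<and> R t s}"
      then have s: "t div B * B \<le> s" "s < t" unfolding R_def by auto
      have "s - t div B * B < t mod B" using s div_mult_mod_eq[of t B] by linarith
      then show "s \<in> (\<lambda>r. t div B * B + r) ` {..<t mod B}"
        using s by (intro image_eqI[of _ _ "s - t div B * B"]) auto
    next
      fix s assume "s \<in> (\<lambda>r. t div B * B + r) ` {..<t mod B}"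
      then obtain r where r: "r < t mod B" "s = t div B * B + r" by auto
      then have "s < t" using div_mult_mod_eq[of t B] by linarith
      then show "s \<in> {s. s \<in> {..<K} \<and> R t s}" using r t unfolding R_def by auto
    qed
    then show ?thesis by (simp add: sum.reindex)
  qed
  have "(\<Sum>t<K. \<Sum>r<t mod B. b (t div B * B + r)) = (\<Sum>t<K. \<Sum>s\<in>{s. s \<in> {..<K} \<and> R t s}. b s)"
    by (rule sum.cong[OF refl], rule 1, simp)
  also have "\<dots> = (\<Sum>s<K. \<Sum>t\<in>{t. t \<in> {..<K} \<and> R t s}. b s)"
    by (rule sum.swap_restrict) auto
  also have "\<dots> = (\<Sum>s<K. real (card {t. t \<in> {..<K} \<and> R t s}) * b s)"
    by simp
  also have "\<dots> \<le> (\<Sum>s<K. (real B - 1) * b s)"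
  proof (intro sum_mono mult_right_mono b0)
    fix s
    have sub: "{t. t \<in> {..<K} \<and> R t s} \<subseteq> {Suc s..<(s div B + 1) * B}"
    proof
      fix t assume "t \<in> {t. t \<in> {..<K} \<and> R t s}"
      then have t: "t div B * B \<le> s" "s < t" unfolding R_def by auto
      have "t div B \<le> s div B" using t(1) B by (metis div_le_mono div_mult_self_is_m)
      moreover have "s div B \<le> t div B" using t(2) by (simp add: div_le_mono)
      ultimately have "t div B = s div B" by simp
      moreover have "t < (t div B + 1) * B"
      proof -
        have e: "t div B * B + t mod B = t" by (rule div_mult_mod_eq)
        have "t < t div B * B + B" using e mod_less_divisor[OF B, of t] by linarith
        then show ?thesis by (simp add: algebra_simps)
      qed
      ultimately show "t \<in> {Suc s..<(s div B + 1) * B}" using t by simp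
    qed
    have "card {t. t \<in> {..<K} \<and> R t s} \<le> card {Suc s..<(s div B + 1) * B}"
      by (rule card_mono[OF _ sub]) simp
    also have "\<dots> = (s div B + 1) * B - Suc s" by simp
    also have "\<dots> \<le> B - 1"
    proof -
      have "s div B * B \<le> s" using div_mult_mod_eq[of s B] by linarith
      moreover have "(s div B + 1) * B = s div B * B + B" by simp
      ultimately show ?thesis by arith
    qed
    finally have "card {t. t \<in> {..<K} \<and> R t s} \<le> B - 1" .
    then show "real (card {t. t \<in> {..<K} \<and> R t s}) \<le> real B - 1" using B by linarith
  qed
  also have "\<dots> = (real B - 1) * (\<Sum>t<K. b t)" by (simp add: sum_distrib_left)
  finally show ?thesis .
qed

locale lsgd =
  fixes f :: "'a::euclidean_space \<Rightarrow> real" and df :: "'a \<Rightarrow> 'a"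
    and L fstar \<sigma> :: real
    and D :: "'b measure" and g :: "'a \<Rightarrow> 'b \<Rightarrow> 'a"
    and n B :: nat and M :: "nat \<Rightarrow> nat \<Rightarrow> nat" and w0 :: 'a and \<gamma> :: real
  assumes diff: "\<forall>x. (f has_derivative (\<lambda>h. df x \<bullet> h)) (at x)"
    and smooth: "\<forall>x y. norm (df x - df y) \<le> L * norm (x - y)"
    and Lpos: "L > 0"
    and lower: "\<forall>x. fstar \<le> f x"
    and prob: "prob_space D"
    and meas: "case_prod g \<in> borel_measurable (borel \<Otimes>\<^sub>M D)"
    and unbiased: "\<forall>x. integrable D (g x) \<and> (\<integral>\<xi>. g x \<xi> \<partial>D) = df x"
    and variance: "\<forall>x. (\<integral>\<^sup>+\<xi>. ennreal ((norm (g x \<xi> - df x))\<^sup>2) \<partial>D) \<le> ennreal (\<sigma>\<^sup>2)"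
    and n_pos: "n \<ge> 1" and B_pos: "B \<ge> 1"
    and Msum: "\<forall>k. (\<Sum>i<n. M k i) = B"
    and gpos: "\<gamma> > 0"
    and gle: "2 * real B * L * \<gamma> \<le> 1"
begin

lemma gmeas:
  assumes "Z \<in> borel_measurable N" "Y \<in> measurable N D"
  shows "(\<lambda>w. g (Z w) (Y w)) \<in> borel_measurable N"
proof -
  have "(\<lambda>w. (Z w, Y w)) \<in> measurable N (borel \<Otimes>\<^sub>M D)"
    using assms by (intro measurable_Pair) auto
  from measurable_compose[OF this meas] show ?thesis by simp
qed

lemma gmeas_D: "g z \<in> borel_measurable D"
  using gmeas[of "\<lambda>_. z" D "\<lambda>x. x"] by simp

lemma noise_int:
  "integrable D (\<lambda>\<xi>. (norm (g z \<xi> - df z))\<^sup>2) \<and> (\<integral>\<xi>. (norm (g z \<xi> - df z))\<^sup>2 \<partial>D) \<le> \<sigma>\<^sup>2"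
proof -
  have m: "(\<lambda>\<xi>. (norm (g z \<xi> - df z))\<^sup>2) \<in> borel_measurable D"
    using gmeas_D[of z] by measurable
  have fin: "(\<integral>\<^sup>+\<xi>. ennreal ((norm (g z \<xi> - df z))\<^sup>2) \<partial>D) \<le> ennreal (\<sigma>\<^sup>2)"
    using variance by auto
  have int: "integrable D (\<lambda>\<xi>. (norm (g z \<xi> - df z))\<^sup>2)"
  proof (rule integrableI_bounded[OF m])
    show "(\<integral>\<^sup>+\<xi>. ennreal (norm ((norm (g z \<xi> - df z))\<^sup>2)) \<partial>D) < \<infinity>"
      using fin by (simp add: le_less_trans)
  qed
  have "ennreal (\<integral>\<xi>. (norm (g z \<xi> - df z))\<^sup>2 \<partial>D) \<le> ennreal (\<sigma>\<^sup>2)"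
    using nn_integral_eq_integral[OF int] fin by simp
  then show ?thesis using int by (simp add: ennreal_le_iff)
qed

lemma cond_noise:
  "(\<integral>\<^sup>+\<xi>. ennreal ((norm (V + (g z \<xi> - df z)))\<^sup>2) \<partial>D) \<le> ennreal ((norm V)\<^sup>2 + \<sigma>\<^sup>2)"
proof -
  interpret D: prob_space D by (rule prob)
  have gi: "integrable D (g z)" using unbiased by auto
  have gI: "(\<integral>\<xi>. g z \<xi> \<partial>D) = df z" using unbiased by auto
  obtain ni: "integrable D (\<lambda>\<xi>. (norm (g z \<xi> - df z))\<^sup>2)"
    and nb: "(\<integral>\<xi>. (norm (g z \<xi> - df z))\<^sup>2 \<partial>D) \<le> \<sigma>\<^sup>2"
    using noise_int[of z] by auto
  have eq: "(norm (V + (g z \<xi> - df z)))\<^sup>2 = ((norm V)\<^sup>2 - 2 * (V \<bullet> df z)) + 2 * (V \<bullet> g z \<xi>) + (norm (g z \<xi> - df z))\<^sup>2" for \<xi>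
    by (simp add: power2_norm_eq_inner inner_add_left inner_add_right inner_diff_left inner_diff_right inner_commute algebra_simps)
  have i2: "integrable D (\<lambda>\<xi>. ((norm V)\<^sup>2 - 2 * (V \<bullet> df z)) + 2 * (V \<bullet> g z \<xi>) + (norm (g z \<xi> - df z))\<^sup>2)"
    using gi ni by auto
  have I2: "(\<integral>\<xi>. ((norm V)\<^sup>2 - 2 * (V \<bullet> df z)) + 2 * (V \<bullet> g z \<xi>) + (norm (g z \<xi> - df z))\<^sup>2 \<partial>D)
     = (norm V)\<^sup>2 + (\<integral>\<xi>. (norm (g z \<xi> - df z))\<^sup>2 \<partial>D)"
    using gi ni gI by (simp add: Bochner_Integration.integral_add D.prob_space)
  have "(\<integral>\<^sup>+\<xi>. ennreal ((norm (V + (g z \<xi> - df z)))\<^sup>2) \<partial>D)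
      = (\<integral>\<^sup>+\<xi>. ennreal (((norm V)\<^sup>2 - 2 * (V \<bullet> df z)) + 2 * (V \<bullet> g z \<xi>) + (norm (g z \<xi> - df z))\<^sup>2) \<partial>D)"
    by (simp only: eq)
  also have "\<dots> = ennreal (\<integral>\<xi>. ((norm V)\<^sup>2 - 2 * (V \<bullet> df z)) + 2 * (V \<bullet> g z \<xi>) + (norm (g z \<xi> - df z))\<^sup>2 \<partial>D)"
  proof (rule nn_integral_eq_integral[OF i2])
    show "AE \<xi> in D. 0 \<le> ((norm V)\<^sup>2 - 2 * (V \<bullet> df z)) + 2 * (V \<bullet> g z \<xi>) + (norm (g z \<xi> - df z))\<^sup>2"
      by (intro AE_I2) (simp only: eq[symmetric] zero_le_power2)
  qed
  also have "\<dots> = ennreal ((norm V)\<^sup>2 + (\<integral>\<xi>. (norm (g z \<xi> - df z))\<^sup>2 \<partial>D))"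
    by (simp only: I2)
  also have "\<dots> \<le> ennreal ((norm V)\<^sup>2 + \<sigma>\<^sup>2)"
    using nb by (intro ennreal_leI) simp
  finally show ?thesis .
qed

lemma Lg_le: "L * \<gamma> \<le> 1 / 2"
proof -
  have "L * \<gamma> \<le> real B * L * \<gamma>" using B_pos Lpos gpos by (simp add: mult_right_mono)
  then show ?thesis using gle by simp
qed

lemma cond_descent:
  "(\<integral>\<^sup>+\<xi>. ennreal (f (x - \<gamma> *\<^sub>R g z \<xi>) - fstar) \<partial>D) + ennreal (\<gamma> / 2 * (norm (df x))\<^sup>2)
     + ennreal (\<gamma> / 2 * (1 - L * \<gamma>) * (norm (df z))\<^sup>2)
   \<le> ennreal (f x - fstar) + ennreal (\<gamma> / 2 * (norm (df x - df z))\<^sup>2) + ennreal (L * \<gamma>\<^sup>2 * \<sigma>\<^sup>2 / 2)"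
proof -
  interpret D: prob_space D by (rule prob)
  have gi: "integrable D (g z)" using unbiased by auto
  have gI: "(\<integral>\<xi>. g z \<xi> \<partial>D) = df z" using unbiased by auto
  obtain ni: "integrable D (\<lambda>\<xi>. (norm (g z \<xi> - df z))\<^sup>2)"
    and nb: "(\<integral>\<xi>. (norm (g z \<xi> - df z))\<^sup>2 \<partial>D) \<le> \<sigma>\<^sup>2"
    using noise_int[of z] by auto
  define a where "a = df x"
  define b where "b = df z"
  define V where "V = (\<integral>\<xi>. (norm (g z \<xi> - df z))\<^sup>2 \<partial>D)"
  have V0: "0 \<le> V" unfolding V_def by (intro integral_nonneg_AE) auto
  define Q where "Q \<xi> = (f x - fstar - L * \<gamma>\<^sup>2 / 2 * (norm b)\<^sup>2) + ((L * \<gamma>\<^sup>2) *\<^sub>R b - \<gamma> *\<^sub>R a) \<bullet> g z \<xi>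
      + L * \<gamma>\<^sup>2 / 2 * (norm (g z \<xi> - df z))\<^sup>2" for \<xi>
  have Qeq: "Q \<xi> = f x - fstar - \<gamma> * (a \<bullet> g z \<xi>) + L / 2 * (\<gamma>\<^sup>2 * (norm (g z \<xi>))\<^sup>2)" for \<xi>
    unfolding Q_def b_def
    by (simp add: power2_norm_eq_inner inner_add_left inner_add_right inner_diff_left inner_diff_right
        inner_commute algebra_simps)
  have fle: "f (x - \<gamma> *\<^sub>R g z \<xi>) - fstar \<le> Q \<xi>" for \<xi>
  proof -
    have nn: "(norm ((x - \<gamma> *\<^sub>R g z \<xi>) - x))\<^sup>2 = \<gamma>\<^sup>2 * (norm (g z \<xi>))\<^sup>2"
      by (simp add: power_mult_distrib)
    have "(x - \<gamma> *\<^sub>R g z \<xi>) - x = - (\<gamma> *\<^sub>R g z \<xi>)" by simp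
    then show ?thesis
      using descent_lemma[OF diff smooth, of "x - \<gamma> *\<^sub>R g z \<xi>" x] unfolding Qeq a_def nn
      by (simp add: inner_minus_right)
  qed
  have Q0: "0 \<le> Q \<xi>" for \<xi> using fle[of \<xi>] lower by (metis diff_ge_0_iff_ge order_trans)
  have Qi: "integrable D Q" unfolding Q_def using gi ni by auto
  have QI: "(\<integral>\<xi>. Q \<xi> \<partial>D) = f x - fstar - L * \<gamma>\<^sup>2 / 2 * (norm b)\<^sup>2 + ((L * \<gamma>\<^sup>2) *\<^sub>R b - \<gamma> *\<^sub>R a) \<bullet> b + L * \<gamma>\<^sup>2 / 2 * V"
    unfolding Q_def V_def using gi ni gI by (simp add: Bochner_Integration.integral_add D.prob_space b_def)
  have "(\<integral>\<^sup>+\<xi>. ennreal (f (x - \<gamma> *\<^sub>R g z \<xi>) - fstar) \<partial>D) \<le> (\<integral>\<^sup>+\<xi>. ennreal (Q \<xi>) \<partial>D)"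
    by (intro nn_integral_mono ennreal_leI fle)
  also have "\<dots> = ennreal (\<integral>\<xi>. Q \<xi> \<partial>D)"
    by (rule nn_integral_eq_integral[OF Qi]) (simp add: Q0)
  finally have s1: "(\<integral>\<^sup>+\<xi>. ennreal (f (x - \<gamma> *\<^sub>R g z \<xi>) - fstar) \<partial>D) \<le> ennreal (\<integral>\<xi>. Q \<xi> \<partial>D)" .
  have I0: "0 \<le> (\<integral>\<xi>. Q \<xi> \<partial>D)" by (intro integral_nonneg_AE) (simp add: Q0)
  have p1: "0 \<le> \<gamma> / 2 * (norm (df x))\<^sup>2" using gpos by simp
  have p2: "0 \<le> \<gamma> / 2 * (1 - L * \<gamma>) * (norm (df z))\<^sup>2" using gpos Lg_le by simp
  have r1: "0 \<le> f x - fstar" using lower by simp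
  have r2: "0 \<le> \<gamma> / 2 * (norm (df x - df z))\<^sup>2" using gpos by simp
  have r3: "0 \<le> L * \<gamma>\<^sup>2 * \<sigma>\<^sup>2 / 2" using Lpos by simp
  have key: "(\<integral>\<xi>. Q \<xi> \<partial>D) + \<gamma> / 2 * (norm (df x))\<^sup>2 + \<gamma> / 2 * (1 - L * \<gamma>) * (norm (df z))\<^sup>2
      = (f x - fstar) + \<gamma> / 2 * (norm (df x - df z))\<^sup>2 + L * \<gamma>\<^sup>2 * V / 2"
    unfolding QI a_def b_def
    by (simp add: power2_norm_eq_inner inner_add_left inner_add_right inner_diff_left inner_diff_right
        inner_commute algebra_simps) (simp add: power2_eq_square field_simps)
  have key2: "L * \<gamma>\<^sup>2 * V / 2 \<le> L * \<gamma>\<^sup>2 * \<sigma>\<^sup>2 / 2"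
    using nb Lpos unfolding V_def by (simp add: mult_left_mono)
  have "(\<integral>\<^sup>+\<xi>. ennreal (f (x - \<gamma> *\<^sub>R g z \<xi>) - fstar) \<partial>D) + ennreal (\<gamma> / 2 * (norm (df x))\<^sup>2)
     + ennreal (\<gamma> / 2 * (1 - L * \<gamma>) * (norm (df z))\<^sup>2)
     \<le> ennreal (\<integral>\<xi>. Q \<xi> \<partial>D) + ennreal (\<gamma> / 2 * (norm (df x))\<^sup>2)
     + ennreal (\<gamma> / 2 * (1 - L * \<gamma>) * (norm (df z))\<^sup>2)"
    using s1 by (intro add_mono) auto
  also have "\<dots> = ennreal ((\<integral>\<xi>. Q \<xi> \<partial>D) + \<gamma> / 2 * (norm (df x))\<^sup>2 + \<gamma> / 2 * (1 - L * \<gamma>) * (norm (df z))\<^sup>2)"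
    using I0 p1 p2 by (simp add: ennreal_plus)
  also have "\<dots> \<le> ennreal ((f x - fstar) + \<gamma> / 2 * (norm (df x - df z))\<^sup>2 + L * \<gamma>\<^sup>2 * \<sigma>\<^sup>2 / 2)"
    unfolding key using key2 by (intro ennreal_leI) simp
  also have "\<dots> = ennreal (f x - fstar) + ennreal (\<gamma> / 2 * (norm (df x - df z))\<^sup>2) + ennreal (L * \<gamma>\<^sup>2 * \<sigma>\<^sup>2 / 2)"
    using r1 r2 r3 by (simp add: ennreal_plus)
  finally show ?thesis .
qed

end

context lsgd begin

abbreviation "\<Omega> \<equiv> PiM (UNIV :: (nat \<times> nat \<times> nat) set) (\<lambda>_. D)"

definition "ww k \<omega> = server_iter g \<gamma> n M w0 \<omega> k"
definition "LI k i \<omega> j = local_iter g \<gamma> (ww k \<omega>) (\<lambda>l. \<omega> (k, i, l)) j"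
definition "kk t = t div B"
definition "rr t = t mod B"
definition "ri t = fst (round_order n M (kk t) ! rr t)"
definition "rj t = snd (round_order n M (kk t) ! rr t)"
definition "idx t = (kk t, ri t, rj t)"
definition "zz t \<omega> = LI (kk t) (ri t) \<omega> (rj t)"
definition "GG t \<omega> = g (zz t \<omega>) (\<omega> (idx t))"
definition "xx t \<omega> = main_branch g \<gamma> n M B w0 \<omega> t"

lemma rr_lt: "rr t < B" using B_pos unfolding rr_def by simp

lemma kk_rr: "kk t * B + rr t = t" unfolding kk_def rr_def by simp

lemma kk_add: "r < B \<Longrightarrow> kk (k * B + r) = k" unfolding kk_def by simp
lemma rr_add: "r < B \<Longrightarrow> rr (k * B + r) = r" unfolding rr_def by simp

lemma rij: "ri t < n \<and> rj t < M (kk t) (ri t) \<and> stt M (kk t) (ri t) + rj t = rr t"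
  using ro_nth[where r="rr t" and n=n and M=M and k="kk t"] rr_lt Msum
  unfolding ri_def rj_def by simp

lemma stt_B: "i < n \<Longrightarrow> stt M k i + M k i \<le> B"
  using stt_le[of i n M k] Msum by simp

lemma round_grad_eq: "r < B \<Longrightarrow> round_grad g \<gamma> n M w0 \<omega> k r = GG (k * B + r) \<omega>"
  unfolding round_grad_def GG_def zz_def LI_def ww_def idx_def ri_def rj_def by (simp add: Let_def kk_add rr_add)

lemma LI_Suc: "LI k i \<omega> (Suc j) = LI k i \<omega> j - \<gamma> *\<^sub>R g (LI k i \<omega> j) (\<omega> (k, i, j))"
  unfolding LI_def by simp

lemma LI_sum: "LI k i \<omega> j = ww k \<omega> - \<gamma> *\<^sub>R (\<Sum>l<j. g (LI k i \<omega> l) (\<omega> (k, i, l)))"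
  by (induction j) (auto simp: LI_Suc scaleR_add_right LI_def[of k i \<omega> 0])

lemma GG_LI:
  assumes "i < n" "l < M k i"
  shows "GG (k * B + stt M k i + l) \<omega> = g (LI k i \<omega> l) (\<omega> (k, i, l))"
proof -
  have lt: "stt M k i + l < B" using stt_B[OF assms(1), of k] assms(2) by simp
  have ro: "round_order n M k ! (stt M k i + l) = (i, l)" by (rule ro_nth2[where n=n and M=M and k=k and i=i and j=l, OF assms])
  have k: "kk (k * B + stt M k i + l) = k" using kk_add[OF lt, of k] by (simp add: add.assoc)
  have r: "rr (k * B + stt M k i + l) = stt M k i + l" using rr_add[OF lt, of k] by (simp add: add.assoc)
  show ?thesis
    unfolding GG_def zz_def idx_def ri_def rj_def k r ro by simp
qed

lemma ww_Suc: "ww (Suc k) \<omega> = ww k \<omega> - \<gamma> *\<^sub>R (\<Sum>r<B. GG (k * B + r) \<omega>)"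
proof -
  have "(\<Sum>r<B. GG (k * B + r) \<omega>) = (\<Sum>r<(\<Sum>i<n. M k i). GG (k * B + stt M k (fst (round_order n M k ! r)) + snd (round_order n M k ! r)) \<omega>)"
    using ro_nth[where n=n and M=M and k=k] Msum by (intro sum.cong) (auto simp: add.assoc)
  also have "\<dots> = (\<Sum>i<n. \<Sum>j<M k i. GG (k * B + stt M k i + j) \<omega>)"
    by (rule ro_sum[where F="\<lambda>p. GG (k * B + stt M k (fst p) + snd p) \<omega>", simplified])
  also have "\<dots> = (\<Sum>i<n. \<Sum>j<M k i. g (LI k i \<omega> j) (\<omega> (k, i, j)))"
    by (intro sum.cong refl GG_LI) auto
  finally show ?thesis unfolding ww_def LI_def by simp
qed

lemma round_partial_eq: "r \<le> B \<Longrightarrow> round_partial g \<gamma> n M w0 \<omega> k r = ww k \<omega> - \<gamma> *\<^sub>R (\<Sum>r'<r. GG (k * B + r') \<omega>)"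
  by (induction r) (auto simp: ww_def round_grad_eq scaleR_add_right kk_add rr_add)

lemma xx_eq: "xx t \<omega> = ww (kk t) \<omega> - \<gamma> *\<^sub>R (\<Sum>r'<rr t. GG (kk t * B + r') \<omega>)"
  using round_partial_eq[where r="rr t" and \<omega>=\<omega> and k="kk t"] rr_lt[of t]
  unfolding xx_def main_branch_def kk_def rr_def by simp

lemma xx_Suc: "xx (Suc t) \<omega> = xx t \<omega> - \<gamma> *\<^sub>R GG t \<omega>"
proof -
  have S: "(\<Sum>r'<Suc (rr t). GG (kk t * B + r') \<omega>) = (\<Sum>r'<rr t. GG (kk t * B + r') \<omega>) + GG t \<omega>"
    using sum.lessThan_Suc[of "\<lambda>r'. GG (kk t * B + r') \<omega>" "rr t"] kk_rr[of t] by metis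
  show ?thesis
  proof (cases "Suc (rr t) < B")
    case True
    have e: "Suc t = kk t * B + Suc (rr t)" using kk_rr[of t] by simp
    have k1: "kk (Suc t) = kk t" by (subst e, rule kk_add[OF True])
    have r1: "rr (Suc t) = Suc (rr t)" by (subst e, rule rr_add[OF True])
    have "xx (Suc t) \<omega> = ww (kk t) \<omega> - \<gamma> *\<^sub>R (\<Sum>r'<Suc (rr t). GG (kk t * B + r') \<omega>)"
      unfolding xx_eq[of "Suc t"] k1 r1 ..
    also have "\<dots> = xx t \<omega> - \<gamma> *\<^sub>R GG t \<omega>"
      unfolding S xx_eq[of t] by (simp add: scaleR_add_right)
    finally show ?thesis .
  next
    case False
    then have rB: "Suc (rr t) = B" using rr_lt[of t] by simp
    have e: "Suc t = Suc (kk t) * B + 0" using kk_rr[of t] rB by simp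
    have B0: "0 < B" using B_pos by simp
    have k1: "kk (Suc t) = Suc (kk t)" by (subst e, rule kk_add[OF B0])
    have r1: "rr (Suc t) = 0" by (subst e, rule rr_add[OF B0])
    have "xx (Suc t) \<omega> = ww (Suc (kk t)) \<omega>"
      unfolding xx_eq[of "Suc t"] k1 r1 by simp
    also have "\<dots> = ww (kk t) \<omega> - \<gamma> *\<^sub>R (\<Sum>r'<Suc (rr t). GG (kk t * B + r') \<omega>)"
      unfolding ww_Suc rB ..
    also have "\<dots> = xx t \<omega> - \<gamma> *\<^sub>R GG t \<omega>"
      unfolding S xx_eq[of t] by (simp add: scaleR_add_right)
    finally show ?thesis .
  qed
qed

lemma zz_eq: "zz t \<omega> = ww (kk t) \<omega> - \<gamma> *\<^sub>R (\<Sum>l<rj t. GG (kk t * B + stt M (kk t) (ri t) + l) \<omega>)"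
proof -
  have "(\<Sum>l<rj t. GG (kk t * B + stt M (kk t) (ri t) + l) \<omega>) = (\<Sum>l<rj t. g (LI (kk t) (ri t) \<omega> l) (\<omega> (kk t, ri t, l)))"
  proof (rule sum.cong[OF refl])
    fix l assume "l \<in> {..<rj t}"
    then have "l < M (kk t) (ri t)" using rij[of t] by simp
    then show "GG (kk t * B + stt M (kk t) (ri t) + l) \<omega> = g (LI (kk t) (ri t) \<omega> l) (\<omega> (kk t, ri t, l))"
      using GG_LI[of "ri t" l "kk t" \<omega>] rij[of t] by blast
  qed
  then show ?thesis unfolding zz_def using LI_sum[of "kk t" "ri t" \<omega> "rj t"] by simp
qed

definition "cc t = stt M (kk t) (ri t)"

lemma cc_le: "cc t \<le> rr t" using rij[of t] unfolding cc_def by simp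

lemma xx_zz: "xx t \<omega> - zz t \<omega> = - \<gamma> *\<^sub>R (\<Sum>r'<cc t. GG (kk t * B + r') \<omega>)"
proof -
  define Sa where "Sa = (\<Sum>r'<cc t. GG (kk t * B + r') \<omega>)"
  define Sb where "Sb = (\<Sum>l<rj t. GG (kk t * B + cc t + l) \<omega>)"
  have "rr t = cc t + rj t" using rij[of t] unfolding cc_def by simp
  then have "(\<Sum>r'<rr t. GG (kk t * B + r') \<omega>) = Sa + (\<Sum>l<rj t. GG (kk t * B + (cc t + l)) \<omega>)"
    using sum_lessThan_add_split[of "\<lambda>r'. GG (kk t * B + r') \<omega>" "cc t" "rj t"] unfolding Sa_def by simp
  also have "(\<Sum>l<rj t. GG (kk t * B + (cc t + l)) \<omega>) = Sb"
    unfolding Sb_def by (intro sum.cong refl) (simp only: add.assoc)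
  finally have x: "xx t \<omega> = ww (kk t) \<omega> - \<gamma> *\<^sub>R (Sa + Sb)" by (simp only: xx_eq)
  have z: "zz t \<omega> = ww (kk t) \<omega> - \<gamma> *\<^sub>R Sb" unfolding zz_eq Sb_def cc_def ..
  show ?thesis unfolding x z Sa_def[symmetric] by (simp add: algebra_simps)
qed

end

context lsgd begin

definition "Pset T = {(k, i, j). i < n \<and> j < M k i \<and> k * B + stt M k i + j < T}"
definition "agree T \<omega> \<omega>' \<longleftrightarrow> (\<forall>c\<in>Pset T. \<omega> c = \<omega>' c)"

lemma agree_mono: "T \<le> T' \<Longrightarrow> agree T' \<omega> \<omega>' \<Longrightarrow> agree T \<omega> \<omega>'"
  unfolding agree_def Pset_def by auto

lemma idx_pos: "kk t * B + stt M (kk t) (ri t) + rj t = t"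
  using rij[of t] kk_rr[of t] by simp

lemma idx_in: "t < T \<Longrightarrow> idx t \<in> Pset T"
  using rij[of t] idx_pos[of t] unfolding Pset_def idx_def by simp

lemma idx_notin: "idx t \<notin> Pset t"
  using idx_pos[of t] unfolding Pset_def idx_def by simp

lemma agree_upd: "agree t \<omega> (fun_upd \<omega> (idx t) c)"
  using idx_notin[of t] unfolding agree_def by auto

lemma LI_dep:
  assumes w: "ww k \<omega> = ww k \<omega>'" and a: "agree T \<omega> \<omega>'" and i: "i < n"
  shows "j \<le> M k i \<Longrightarrow> k * B + stt M k i + j \<le> T \<Longrightarrow> LI k i \<omega> j = LI k i \<omega>' j"
proof (induction j)
  case 0 then show ?case using w by (simp add: LI_def)
next
  case (Suc j)
  have "(k, i, j) \<in> Pset T" using Suc.prems i unfolding Pset_def by simp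
  then have "\<omega> (k, i, j) = \<omega>' (k, i, j)" using a unfolding agree_def by auto
  then show ?case using Suc by (simp add: LI_Suc)
qed

lemma zz_dep_aux:
  assumes w: "ww (kk t) \<omega> = ww (kk t) \<omega>'" and a: "agree T \<omega> \<omega>'" and t: "t \<le> T"
  shows "zz t \<omega> = zz t \<omega>'"
  unfolding zz_def using LI_dep[OF w a, of "ri t" "rj t"] rij[of t] idx_pos[of t] t by simp

lemma GG_dep_aux:
  assumes w: "ww (kk t) \<omega> = ww (kk t) \<omega>'" and a: "agree T \<omega> \<omega>'" and t: "t < T"
  shows "GG t \<omega> = GG t \<omega>'"
proof -
  have "\<omega> (idx t) = \<omega>' (idx t)" using idx_in[OF t] a unfolding agree_def by auto
  then show ?thesis unfolding GG_def using zz_dep_aux[OF w a] t by simp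
qed

lemma ww_dep: "k * B \<le> T \<Longrightarrow> agree T \<omega> \<omega>' \<Longrightarrow> ww k \<omega> = ww k \<omega>'"
proof (induction k)
  case 0 then show ?case by (simp add: ww_def)
next
  case (Suc k)
  have w: "ww k \<omega> = ww k \<omega>'" using Suc by simp
  have "GG (k * B + r) \<omega> = GG (k * B + r) \<omega>'" if r: "r < B" for r
  proof (rule GG_dep_aux[OF _ Suc.prems(2)])
    show "ww (kk (k * B + r)) \<omega> = ww (kk (k * B + r)) \<omega>'" using w kk_add[OF r] by simp
    show "k * B + r < T" using r Suc.prems(1) by simp
  qed
  then show ?case using w by (simp add: ww_Suc)
qed

lemma zz_dep: "t \<le> T \<Longrightarrow> agree T \<omega> \<omega>' \<Longrightarrow> zz t \<omega> = zz t \<omega>'"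
  using zz_dep_aux ww_dep[of "kk t" T] kk_rr[of t] by (metis le_add1 order_trans)

lemma GG_dep: "t < T \<Longrightarrow> agree T \<omega> \<omega>' \<Longrightarrow> GG t \<omega> = GG t \<omega>'"
  using GG_dep_aux ww_dep[of "kk t" T] kk_rr[of t] by (metis le_add1 order_trans less_imp_le)

lemma xx_dep:
  assumes t: "t \<le> T" and a: "agree T \<omega> \<omega>'"
  shows "xx t \<omega> = xx t \<omega>'"
proof -
  have w: "ww (kk t) \<omega> = ww (kk t) \<omega>'" using ww_dep[of "kk t" T] kk_rr[of t] t a by (metis le_add1 order_trans)
  have "GG (kk t * B + r') \<omega> = GG (kk t * B + r') \<omega>'" if "r' < rr t" for r'
    using GG_dep[OF _ a] that kk_rr[of t] t by simp
  then show ?thesis using w by (simp add: xx_eq)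
qed

lemma comp_meas: "(\<lambda>\<omega>. \<omega> c) \<in> measurable \<Omega> D"
  by (rule measurable_component_singleton) simp

lemma LI_meas:
  assumes w: "(\<lambda>\<omega>. ww k \<omega>) \<in> borel_measurable \<Omega>"
  shows "(\<lambda>\<omega>. LI k i \<omega> j) \<in> borel_measurable \<Omega>"
proof (induction j)
  case 0 then show ?case using w by (simp add: LI_def)
next
  case (Suc j)
  have "(\<lambda>\<omega>. g (LI k i \<omega> j) (\<omega> (k, i, j))) \<in> borel_measurable \<Omega>"
    by (rule gmeas[OF Suc comp_meas])
  then show ?case unfolding LI_Suc using Suc by measurable
qed

lemma GG_meas_aux:
  assumes w: "(\<lambda>\<omega>. ww (kk t) \<omega>) \<in> borel_measurable \<Omega>"
  shows "(\<lambda>\<omega>. zz t \<omega>) \<in> borel_measurable \<Omega>" "(\<lambda>\<omega>. GG t \<omega>) \<in> borel_measurable \<Omega>"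
proof -
  show z: "(\<lambda>\<omega>. zz t \<omega>) \<in> borel_measurable \<Omega>" unfolding zz_def by (rule LI_meas[OF w])
  show "(\<lambda>\<omega>. GG t \<omega>) \<in> borel_measurable \<Omega>" unfolding GG_def by (rule gmeas[OF z comp_meas])
qed

lemma ww_meas: "(\<lambda>\<omega>. ww k \<omega>) \<in> borel_measurable \<Omega>"
proof (induction k)
  case 0 then show ?case by (simp add: ww_def)
next
  case (Suc k)
  have "(\<lambda>\<omega>. GG (k * B + r) \<omega>) \<in> borel_measurable \<Omega>" if r: "r < B" for r
    using GG_meas_aux(2)[of "k * B + r"] Suc kk_add[OF r] by simp
  then have "(\<lambda>\<omega>. \<Sum>r<B. GG (k * B + r) \<omega>) \<in> borel_measurable \<Omega>"
    by (intro borel_measurable_sum) simp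
  then show ?case unfolding ww_Suc using Suc by measurable
qed

lemma zz_meas: "(\<lambda>\<omega>. zz t \<omega>) \<in> borel_measurable \<Omega>" by (rule GG_meas_aux(1)[OF ww_meas])
lemma GG_meas: "(\<lambda>\<omega>. GG t \<omega>) \<in> borel_measurable \<Omega>" by (rule GG_meas_aux(2)[OF ww_meas])

lemma xx_meas: "(\<lambda>\<omega>. xx t \<omega>) \<in> borel_measurable \<Omega>"
proof -
  have "(\<lambda>\<omega>. \<Sum>r'<rr t. GG (kk t * B + r') \<omega>) \<in> borel_measurable \<Omega>"
    by (intro borel_measurable_sum GG_meas)
  then show ?thesis unfolding xx_eq using ww_meas by measurable
qed

end

lemma norm_sum_sq:
  fixes v :: "nat \<Rightarrow> 'a::real_normed_vector"
  shows "(norm (\<Sum>r<c. v r))\<^sup>2 \<le> real c * (\<Sum>r<c. (norm (v r))\<^sup>2)"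
proof -
  have "norm (\<Sum>r<c. v r) \<le> (\<Sum>r<c. norm (v r))" by (rule norm_sum)
  then have "(norm (\<Sum>r<c. v r))\<^sup>2 \<le> (\<Sum>r<c. norm (v r))\<^sup>2"
    by (intro power_mono) auto
  also have "\<dots> \<le> (\<Sum>r<c. (norm (v r))\<^sup>2) * card {..<c}"
    by (rule sum_squared_le_sum_of_squares)
  finally show ?thesis by (simp add: mult.commute)
qed

lemma norm_add_sq: "(norm (a + b :: 'a::real_inner))\<^sup>2 \<le> 2 * (norm a)\<^sup>2 + 2 * (norm b)\<^sup>2"
proof -
  have "0 \<le> (norm (a - b))\<^sup>2" by simp
  then show ?thesis
    by (simp add: power2_norm_eq_inner inner_add_left inner_add_right inner_diff_left inner_diff_right inner_commute)
qed

lemma nn_cmult: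
  assumes c: "0 \<le> c" and F: "F \<in> borel_measurable N"
  shows "ennreal c * (\<integral>\<^sup>+\<omega>. ennreal (F \<omega>) \<partial>N) = (\<integral>\<^sup>+\<omega>. ennreal (c * F \<omega>) \<partial>N)"
proof -
  have "ennreal c * (\<integral>\<^sup>+\<omega>. ennreal (F \<omega>) \<partial>N) = (\<integral>\<^sup>+\<omega>. ennreal c * ennreal (F \<omega>) \<partial>N)"
    using F by (subst nn_integral_cmult) auto
  also have "\<dots> = (\<integral>\<^sup>+\<omega>. ennreal (c * F \<omega>) \<partial>N)"
    using c by (intro nn_integral_cong) (simp add: ennreal_mult')
  finally show ?thesis .
qed

context lsgd begin

lemma f_meas[measurable]: "f \<in> borel_measurable borel"
proof (rule borel_measurable_continuous_onI)
  show "continuous_on UNIV f"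
    using diff by (intro continuous_at_imp_continuous_on) (auto intro: has_derivative_continuous)
qed

lemma df_meas[measurable]: "df \<in> borel_measurable borel"
proof (rule borel_measurable_continuous_onI)
  show "continuous_on UNIV df"
    unfolding continuous_on_iff
  proof (intro ballI allI impI)
    fix x :: 'a and e :: real assume e: "0 < e"
    show "\<exists>d>0. \<forall>x'\<in>UNIV. dist x' x < d \<longrightarrow> dist (df x') (df x) < e"
    proof (intro exI[of _ "e / L"] conjI ballI impI)
      show "0 < e / L" using e Lpos by simp
      fix x' assume "dist x' x < e / L"
      then have "L * dist x' x < e" using Lpos by (simp add: field_simps)
      moreover have "dist (df x') (df x) \<le> L * dist x' x"
        using smooth by (simp add: dist_norm)
      ultimately show "dist (df x') (df x) < e" by simp
    qed
  qed
qed

definition "Fv t = (\<integral>\<^sup>+\<omega>. ennreal (f (xx t \<omega>) - fstar) \<partial>\<Omega>)"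
definition "Aq t = (\<integral>\<^sup>+\<omega>. ennreal ((norm (df (xx t \<omega>)))\<^sup>2) \<partial>\<Omega>)"
definition "Bq t = (\<integral>\<^sup>+\<omega>. ennreal ((norm (df (zz t \<omega>)))\<^sup>2) \<partial>\<Omega>)"
definition "Eq t = (\<integral>\<^sup>+\<omega>. ennreal ((norm (df (xx t \<omega>) - df (zz t \<omega>)))\<^sup>2) \<partial>\<Omega>)"

lemma cond_descent':
  "(\<integral>\<^sup>+\<xi>. ennreal (f (x - \<gamma> *\<^sub>R g z \<xi>) - fstar) + ennreal (\<gamma> / 2 * (norm (df x))\<^sup>2)
     + ennreal (\<gamma> / 2 * (1 - L * \<gamma>) * (norm (df z))\<^sup>2) \<partial>D)
   \<le> ennreal (f x - fstar) + ennreal (\<gamma> / 2 * (norm (df x - df z))\<^sup>2) + ennreal (L * \<gamma>\<^sup>2 * \<sigma>\<^sup>2 / 2)"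
proof -
  interpret D: prob_space D by (rule prob)
  have m: "(\<lambda>\<xi>. ennreal (f (x - \<gamma> *\<^sub>R g z \<xi>) - fstar)) \<in> borel_measurable D"
    using gmeas_D[of z] by measurable
  have "(\<integral>\<^sup>+\<xi>. ennreal (f (x - \<gamma> *\<^sub>R g z \<xi>) - fstar) + ennreal (\<gamma> / 2 * (norm (df x))\<^sup>2)
     + ennreal (\<gamma> / 2 * (1 - L * \<gamma>) * (norm (df z))\<^sup>2) \<partial>D)
     = (\<integral>\<^sup>+\<xi>. ennreal (f (x - \<gamma> *\<^sub>R g z \<xi>) - fstar) \<partial>D) + ennreal (\<gamma> / 2 * (norm (df x))\<^sup>2)
     + ennreal (\<gamma> / 2 * (1 - L * \<gamma>) * (norm (df z))\<^sup>2)"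
    using m by (simp add: nn_integral_add D.emeasure_space_1)
  also have "\<dots> \<le> ennreal (f x - fstar) + ennreal (\<gamma> / 2 * (norm (df x - df z))\<^sup>2) + ennreal (L * \<gamma>\<^sup>2 * \<sigma>\<^sup>2 / 2)"
    by (rule cond_descent)
  finally show ?thesis .
qed

lemma descent_exp:
  "Fv (Suc t) + ennreal (\<gamma> / 2) * Aq t + ennreal (\<gamma> / 2 * (1 - L * \<gamma>)) * Bq t
   \<le> Fv t + ennreal (\<gamma> / 2) * Eq t + ennreal (L * \<gamma>\<^sup>2 * \<sigma>\<^sup>2 / 2)"
proof -
  interpret \<Omega>: prob_space \<Omega> by (intro prob_space_PiM prob)
  define h where "h \<omega> \<xi> = ennreal (f (xx t \<omega> - \<gamma> *\<^sub>R g (zz t \<omega>) \<xi>) - fstar) + ennreal (\<gamma> / 2 * (norm (df (xx t \<omega>)))\<^sup>2)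
     + ennreal (\<gamma> / 2 * (1 - L * \<gamma>) * (norm (df (zz t \<omega>)))\<^sup>2)" for \<omega> \<xi>
  have xm: "(\<lambda>p. xx t (snd p)) \<in> borel_measurable (D \<Otimes>\<^sub>M \<Omega>)"
    by (rule measurable_compose[OF measurable_snd xx_meas])
  have zm: "(\<lambda>p. zz t (snd p)) \<in> borel_measurable (D \<Otimes>\<^sub>M \<Omega>)"
    by (rule measurable_compose[OF measurable_snd zz_meas])
  have gm: "(\<lambda>p. g (zz t (snd p)) (fst p)) \<in> borel_measurable (D \<Otimes>\<^sub>M \<Omega>)"
    by (rule gmeas[OF zm measurable_fst])
  have hm: "(\<lambda>p. h (snd p) (fst p)) \<in> borel_measurable (D \<Otimes>\<^sub>M \<Omega>)"
    unfolding h_def using xm zm gm by measurable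
  have inv: "h (fun_upd \<omega> (idx t) c) = h \<omega>" for \<omega> c
  proof -
    have a: "agree t \<omega> (fun_upd \<omega> (idx t) c)" by (rule agree_upd)
    show ?thesis unfolding h_def using xx_dep[OF le_refl a] zz_dep[OF le_refl a] by simp
  qed
  have xm': "(\<lambda>\<omega>. xx t \<omega>) \<in> borel_measurable \<Omega>" by (rule xx_meas)
  have zm': "(\<lambda>\<omega>. zz t \<omega>) \<in> borel_measurable \<Omega>" by (rule zz_meas)
  have GG': "(\<lambda>\<omega>. GG t \<omega>) \<in> borel_measurable \<Omega>" by (rule GG_meas)
  have "Fv (Suc t) + ennreal (\<gamma> / 2) * Aq t + ennreal (\<gamma> / 2 * (1 - L * \<gamma>)) * Bq t
      = (\<integral>\<^sup>+\<omega>. h \<omega> (\<omega> (idx t)) \<partial>\<Omega>)"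
  proof -
    have c1: "ennreal (\<gamma> / 2) * Aq t = (\<integral>\<^sup>+\<omega>. ennreal (\<gamma> / 2 * (norm (df (xx t \<omega>)))\<^sup>2) \<partial>\<Omega>)"
      unfolding Aq_def using gpos xm' by (intro nn_cmult) auto
    have c2: "ennreal (\<gamma> / 2 * (1 - L * \<gamma>)) * Bq t = (\<integral>\<^sup>+\<omega>. ennreal (\<gamma> / 2 * (1 - L * \<gamma>) * (norm (df (zz t \<omega>)))\<^sup>2) \<partial>\<Omega>)"
      unfolding Bq_def using gpos Lg_le zm' by (intro nn_cmult) auto
    have "Fv (Suc t) = (\<integral>\<^sup>+\<omega>. ennreal (f (xx t \<omega> - \<gamma> *\<^sub>R g (zz t \<omega>) (\<omega> (idx t))) - fstar) \<partial>\<Omega>)"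
      unfolding Fv_def xx_Suc GG_def ..
    then show ?thesis unfolding c1 c2 h_def using xm' zm' GG' unfolding GG_def
      by (simp add: nn_integral_add)
  qed
  also have "\<dots> = (\<integral>\<^sup>+\<omega>. (\<integral>\<^sup>+\<xi>. h \<omega> \<xi> \<partial>D) \<partial>\<Omega>)"
    by (rule coord[OF prob hm inv])
  also have "\<dots> \<le> (\<integral>\<^sup>+\<omega>. ennreal (f (xx t \<omega>) - fstar) + ennreal (\<gamma> / 2 * (norm (df (xx t \<omega>) - df (zz t \<omega>)))\<^sup>2)
      + ennreal (L * \<gamma>\<^sup>2 * \<sigma>\<^sup>2 / 2) \<partial>\<Omega>)"
    unfolding h_def by (intro nn_integral_mono cond_descent')
  also have "\<dots> = Fv t + ennreal (\<gamma> / 2) * Eq t + ennreal (L * \<gamma>\<^sup>2 * \<sigma>\<^sup>2 / 2)"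
  proof -
    have c3: "ennreal (\<gamma> / 2) * Eq t = (\<integral>\<^sup>+\<omega>. ennreal (\<gamma> / 2 * (norm (df (xx t \<omega>) - df (zz t \<omega>)))\<^sup>2) \<partial>\<Omega>)"
      unfolding Eq_def using gpos xm' zm' by (intro nn_cmult) auto
    show ?thesis unfolding c3 Fv_def using xm' zm'
      by (simp add: nn_integral_add \<Omega>.emeasure_space_1)
  qed
  finally show ?thesis .
qed

end

lemma enn2:
  assumes "x \<le> 2 * a + 2 * b" "0 \<le> a" "0 \<le> b"
  shows "ennreal x \<le> 2 * ennreal a + 2 * ennreal b"
proof -
  have "ennreal x \<le> ennreal (2 * a + 2 * b)" using assms(1) by (rule ennreal_leI)
  also have "\<dots> = ennreal (2 * a) + ennreal (2 * b)" using assms by (simp add: ennreal_plus)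
  also have "\<dots> = 2 * ennreal a + 2 * ennreal b" by (simp add: ennreal_mult')
  finally show ?thesis .
qed

context lsgd begin

definition "xi s \<omega> = GG s \<omega> - df (zz s \<omega>)"

lemma xi_meas: "(\<lambda>\<omega>. xi s \<omega>) \<in> borel_measurable \<Omega>"
  unfolding xi_def using GG_meas zz_meas by measurable

lemma xi_dep: "s < T \<Longrightarrow> agree T \<omega> \<omega>' \<Longrightarrow> xi s \<omega> = xi s \<omega>'"
  unfolding xi_def using GG_dep[of s T] zz_dep[of s T] by simp

lemma noise_exp: "(\<integral>\<^sup>+\<omega>. ennreal ((norm (\<Sum>r<m. xi (s0 + r) \<omega>))\<^sup>2) \<partial>\<Omega>) \<le> ennreal (real m * \<sigma>\<^sup>2)"
proof (induction m)
  case 0 then show ?case by simp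
next
  case (Suc m)
  interpret \<Omega>: prob_space \<Omega> by (intro prob_space_PiM prob)
  define T where "T = s0 + m"
  define V where "V \<omega> = (\<Sum>r<m. xi (s0 + r) \<omega>)" for \<omega>
  define h where "h \<omega> \<xi> = ennreal ((norm (V \<omega> + (g (zz T \<omega>) \<xi> - df (zz T \<omega>))))\<^sup>2)" for \<omega> \<xi>
  have Vm: "V \<in> borel_measurable \<Omega>" unfolding V_def
    by (intro borel_measurable_sum xi_meas)
  have Vm2: "(\<lambda>p. V (snd p)) \<in> borel_measurable (D \<Otimes>\<^sub>M \<Omega>)"
    by (rule measurable_compose[OF measurable_snd Vm])
  have zm: "(\<lambda>p. zz T (snd p)) \<in> borel_measurable (D \<Otimes>\<^sub>M \<Omega>)"
    by (rule measurable_compose[OF measurable_snd zz_meas])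
  have gm: "(\<lambda>p. g (zz T (snd p)) (fst p)) \<in> borel_measurable (D \<Otimes>\<^sub>M \<Omega>)"
    by (rule gmeas[OF zm measurable_fst])
  have hm: "(\<lambda>p. h (snd p) (fst p)) \<in> borel_measurable (D \<Otimes>\<^sub>M \<Omega>)"
    unfolding h_def using Vm2 zm gm by measurable
  have inv: "h (fun_upd \<omega> (idx T) c) = h \<omega>" for \<omega> c
  proof -
    have a: "agree T \<omega> (fun_upd \<omega> (idx T) c)" by (rule agree_upd)
    have "V (fun_upd \<omega> (idx T) c) = V \<omega>" unfolding V_def
      using xi_dep[OF _ a] T_def by (intro sum.cong refl) (metis add_less_cancel_left lessThan_iff)
    then show ?thesis unfolding h_def using zz_dep[OF le_refl a] by simp
  qed
  have "(\<integral>\<^sup>+\<omega>. ennreal ((norm (\<Sum>r<Suc m. xi (s0 + r) \<omega>))\<^sup>2) \<partial>\<Omega>) = (\<integral>\<^sup>+\<omega>. h \<omega> (\<omega> (idx T)) \<partial>\<Omega>)"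
    unfolding h_def V_def T_def xi_def GG_def by simp
  also have "\<dots> = (\<integral>\<^sup>+\<omega>. (\<integral>\<^sup>+\<xi>. h \<omega> \<xi> \<partial>D) \<partial>\<Omega>)"
    by (rule coord[OF prob hm inv])
  also have "\<dots> \<le> (\<integral>\<^sup>+\<omega>. ennreal ((norm (V \<omega>))\<^sup>2 + \<sigma>\<^sup>2) \<partial>\<Omega>)"
    unfolding h_def by (intro nn_integral_mono cond_noise)
  also have "\<dots> = (\<integral>\<^sup>+\<omega>. ennreal ((norm (V \<omega>))\<^sup>2) \<partial>\<Omega>) + ennreal (\<sigma>\<^sup>2)"
    using Vm by (simp add: ennreal_plus nn_integral_add \<Omega>.emeasure_space_1)
  also have "\<dots> \<le> ennreal (real m * \<sigma>\<^sup>2) + ennreal (\<sigma>\<^sup>2)"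
    using Suc.IH unfolding V_def by (intro add_mono) auto
  also have "\<dots> = ennreal (real m * \<sigma>\<^sup>2 + \<sigma>\<^sup>2)"
    by (rule ennreal_plus[symmetric]) auto
  also have "\<dots> = ennreal (real (Suc m) * \<sigma>\<^sup>2)"
    by (simp add: algebra_simps)
  finally show ?case .
qed

lemma Aq_bound: "Aq t \<le> 2 * Bq t + 2 * Eq t"
proof -
  have m1: "(\<lambda>\<omega>. ennreal ((norm (df (zz t \<omega>)))\<^sup>2)) \<in> borel_measurable \<Omega>" using zz_meas by measurable
  have m2: "(\<lambda>\<omega>. ennreal ((norm (df (xx t \<omega>) - df (zz t \<omega>)))\<^sup>2)) \<in> borel_measurable \<Omega>"
    using zz_meas xx_meas by measurable
  have "Aq t \<le> (\<integral>\<^sup>+\<omega>. 2 * ennreal ((norm (df (zz t \<omega>)))\<^sup>2) + 2 * ennreal ((norm (df (xx t \<omega>) - df (zz t \<omega>)))\<^sup>2) \<partial>\<Omega>)"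
    unfolding Aq_def
  proof (intro nn_integral_mono)
    fix \<omega>
    have "(norm (df (xx t \<omega>)))\<^sup>2 \<le> 2 * (norm (df (zz t \<omega>)))\<^sup>2 + 2 * (norm (df (xx t \<omega>) - df (zz t \<omega>)))\<^sup>2"
      using norm_add_sq[of "df (zz t \<omega>)" "df (xx t \<omega>) - df (zz t \<omega>)"] by simp
    then show "ennreal ((norm (df (xx t \<omega>)))\<^sup>2) \<le> 2 * ennreal ((norm (df (zz t \<omega>)))\<^sup>2) + 2 * ennreal ((norm (df (xx t \<omega>) - df (zz t \<omega>)))\<^sup>2)"
      by (rule enn2) auto
  qed
  also have "\<dots> = 2 * Bq t + 2 * Eq t"
    unfolding Bq_def Eq_def using m1 m2 by (simp add: nn_integral_add nn_integral_cmult)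
  finally show ?thesis .
qed

lemma rr_le: "real (rr t) \<le> real B - 1"
  using rr_lt[of t] by linarith

lemma Eq_point:
  "(norm (df (xx t \<omega>) - df (zz t \<omega>)))\<^sup>2
   \<le> 2 * L\<^sup>2 * \<gamma>\<^sup>2 * (real B - 1) * (\<Sum>r<rr t. (norm (df (zz (kk t * B + r) \<omega>)))\<^sup>2)
     + 2 * L\<^sup>2 * \<gamma>\<^sup>2 * (norm (\<Sum>r<cc t. xi (kk t * B + r) \<omega>))\<^sup>2"
proof -
  define c where "c = cc t"
  define bs where "bs = (\<Sum>r<c. df (zz (kk t * B + r) \<omega>))"
  define ns where "ns = (\<Sum>r<c. xi (kk t * B + r) \<omega>)"
  have sumG: "(\<Sum>r<c. GG (kk t * B + r) \<omega>) = bs + ns"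
    unfolding bs_def ns_def xi_def by (simp add: sum.distrib[symmetric])
  have "norm (df (xx t \<omega>) - df (zz t \<omega>)) \<le> L * norm (xx t \<omega> - zz t \<omega>)"
    using smooth by simp
  also have "norm (xx t \<omega> - zz t \<omega>) = \<gamma> * norm (bs + ns)"
    unfolding xx_zz c_def[symmetric] sumG using gpos by simp
  finally have "norm (df (xx t \<omega>) - df (zz t \<omega>)) \<le> L * (\<gamma> * norm (bs + ns))" .
  then have "(norm (df (xx t \<omega>) - df (zz t \<omega>)))\<^sup>2 \<le> (L * (\<gamma> * norm (bs + ns)))\<^sup>2"
    by (intro power_mono) auto
  also have "\<dots> = L\<^sup>2 * \<gamma>\<^sup>2 * (norm (bs + ns))\<^sup>2" by (simp add: power_mult_distrib)
  also have "\<dots> \<le> L\<^sup>2 * \<gamma>\<^sup>2 * (2 * (norm bs)\<^sup>2 + 2 * (norm ns)\<^sup>2)"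
    by (intro mult_left_mono norm_add_sq) auto
  finally have h1: "(norm (df (xx t \<omega>) - df (zz t \<omega>)))\<^sup>2 \<le> L\<^sup>2 * \<gamma>\<^sup>2 * (2 * (norm bs)\<^sup>2 + 2 * (norm ns)\<^sup>2)" .
  have "(norm bs)\<^sup>2 \<le> real c * (\<Sum>r<c. (norm (df (zz (kk t * B + r) \<omega>)))\<^sup>2)"
    unfolding bs_def by (rule norm_sum_sq)
  also have "\<dots> \<le> (real B - 1) * (\<Sum>r<rr t. (norm (df (zz (kk t * B + r) \<omega>)))\<^sup>2)"
  proof (rule mult_mono)
    show "real c \<le> real B - 1" using cc_le[of t] rr_le[of t] unfolding c_def by linarith
    show "(\<Sum>r<c. (norm (df (zz (kk t * B + r) \<omega>)))\<^sup>2) \<le> (\<Sum>r<rr t. (norm (df (zz (kk t * B + r) \<omega>)))\<^sup>2)"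
      using cc_le[of t] unfolding c_def by (intro sum_mono2) auto
    show "0 \<le> real B - 1" using B_pos by simp
    show "0 \<le> (\<Sum>r<c. (norm (df (zz (kk t * B + r) \<omega>)))\<^sup>2)" by (intro sum_nonneg) auto
  qed
  finally have nb: "(norm bs)\<^sup>2 \<le> (real B - 1) * (\<Sum>r<rr t. (norm (df (zz (kk t * B + r) \<omega>)))\<^sup>2)" .
  have "L\<^sup>2 * \<gamma>\<^sup>2 * (2 * (norm bs)\<^sup>2 + 2 * (norm ns)\<^sup>2)
     \<le> L\<^sup>2 * \<gamma>\<^sup>2 * (2 * ((real B - 1) * (\<Sum>r<rr t. (norm (df (zz (kk t * B + r) \<omega>)))\<^sup>2)) + 2 * (norm ns)\<^sup>2)"
    using nb by (intro mult_left_mono add_mono) auto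
  with h1 show ?thesis unfolding ns_def c_def by (simp add: algebra_simps)
qed

lemma Eq_bound:
  "Eq t \<le> ennreal (2 * L\<^sup>2 * \<gamma>\<^sup>2 * (real B - 1)) * (\<Sum>r<rr t. Bq (kk t * B + r))
     + ennreal (2 * L\<^sup>2 * \<gamma>\<^sup>2 * (real B - 1) * \<sigma>\<^sup>2)"
proof -
  define K1 where "K1 = 2 * L\<^sup>2 * \<gamma>\<^sup>2 * (real B - 1)"
  define K2 where "K2 = 2 * L\<^sup>2 * \<gamma>\<^sup>2"
  have K1: "0 \<le> K1" unfolding K1_def using B_pos by simp
  have K2: "0 \<le> K2" unfolding K2_def by simp
  define S where "S \<omega> = (\<Sum>r<rr t. (norm (df (zz (kk t * B + r) \<omega>)))\<^sup>2)" for \<omega>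
  define N where "N \<omega> = (norm (\<Sum>r<cc t. xi (kk t * B + r) \<omega>))\<^sup>2" for \<omega>
  have Sm: "S \<in> borel_measurable \<Omega>" unfolding S_def
    by (intro borel_measurable_sum) (use zz_meas in measurable)
  have Nm: "N \<in> borel_measurable \<Omega>" unfolding N_def
    using borel_measurable_sum[of "{..<cc t}" "\<lambda>r \<omega>. xi (kk t * B + r) \<omega>" \<Omega>] xi_meas by measurable
  have S0: "0 \<le> S \<omega>" for \<omega> unfolding S_def by (intro sum_nonneg) auto
  have "Eq t \<le> (\<integral>\<^sup>+\<omega>. ennreal (K1 * S \<omega>) + ennreal (K2 * N \<omega>) \<partial>\<Omega>)"
    unfolding Eq_def
  proof (intro nn_integral_mono)
    fix \<omega>
    have "ennreal ((norm (df (xx t \<omega>) - df (zz t \<omega>)))\<^sup>2) \<le> ennreal (K1 * S \<omega> + K2 * N \<omega>)"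
      using Eq_point[of t \<omega>] unfolding K1_def K2_def S_def N_def by (intro ennreal_leI) simp
    also have "\<dots> = ennreal (K1 * S \<omega>) + ennreal (K2 * N \<omega>)"
      using K1 K2 S0[of \<omega>] by (intro ennreal_plus) (auto simp: N_def)
    finally show "ennreal ((norm (df (xx t \<omega>) - df (zz t \<omega>)))\<^sup>2) \<le> ennreal (K1 * S \<omega>) + ennreal (K2 * N \<omega>)" .
  qed
  also have "\<dots> = ennreal K1 * (\<integral>\<^sup>+\<omega>. ennreal (S \<omega>) \<partial>\<Omega>) + ennreal K2 * (\<integral>\<^sup>+\<omega>. ennreal (N \<omega>) \<partial>\<Omega>)"
    using Sm Nm K1 K2 by (simp add: nn_integral_add nn_cmult)
  also have "(\<integral>\<^sup>+\<omega>. ennreal (S \<omega>) \<partial>\<Omega>) = (\<Sum>r<rr t. Bq (kk t * B + r))"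
  proof -
    have "(\<integral>\<^sup>+\<omega>. ennreal (S \<omega>) \<partial>\<Omega>) = (\<integral>\<^sup>+\<omega>. (\<Sum>r<rr t. ennreal ((norm (df (zz (kk t * B + r) \<omega>)))\<^sup>2)) \<partial>\<Omega>)"
      unfolding S_def by (intro nn_integral_cong) (simp add: sum_ennreal)
    also have "\<dots> = (\<Sum>r<rr t. Bq (kk t * B + r))"
      unfolding Bq_def by (rule nn_integral_sum) (use zz_meas in measurable)
    finally show ?thesis .
  qed
  also have "ennreal K2 * (\<integral>\<^sup>+\<omega>. ennreal (N \<omega>) \<partial>\<Omega>) \<le> ennreal K2 * ennreal (real (cc t) * \<sigma>\<^sup>2)"
    unfolding N_def by (intro mult_left_mono noise_exp) auto
  also have "\<dots> \<le> ennreal (K1 * \<sigma>\<^sup>2)"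
  proof -
    have "real (cc t) \<le> real B - 1" using cc_le[of t] rr_le[of t] by linarith
    from mult_left_mono[OF this, of "2 * L\<^sup>2 * \<gamma>\<^sup>2 * \<sigma>\<^sup>2"]
    have "K2 * (real (cc t) * \<sigma>\<^sup>2) \<le> K1 * \<sigma>\<^sup>2"
      unfolding K1_def K2_def by (simp add: algebra_simps)
    then show ?thesis using K2 by (simp add: ennreal_mult'[symmetric] ennreal_leI del: ennreal_mult)
  qed
  finally show ?thesis unfolding K1_def by (simp add: add_mono)
qed

end

context lsgd begin

lemma Fv0: "Fv 0 = ennreal (f w0 - fstar)"
proof -
  interpret \<Omega>: prob_space \<Omega> by (intro prob_space_PiM prob)
  have "xx 0 \<omega> = w0" for \<omega> unfolding xx_eq by (simp add: rr_def kk_def ww_def)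
  then show ?thesis unfolding Fv_def by (simp add: \<Omega>.emeasure_space_1)
qed

definition "Lt t = ennreal (\<gamma> / 2) * Aq t + ennreal (\<gamma> / 2 * (1 - L * \<gamma>)) * Bq t"
definition "Rt t = ennreal (\<gamma> / 2) * Eq t + ennreal (L * \<gamma>\<^sup>2 * \<sigma>\<^sup>2 / 2)"

lemma tele: "Fv T + (\<Sum>t<T. Lt t) \<le> Fv 0 + (\<Sum>t<T. Rt t)"
proof (induction T)
  case 0 then show ?case by simp
next
  case (Suc T)
  have d: "Fv (Suc T) + Lt T \<le> Fv T + Rt T"
    using descent_exp[of T] unfolding Lt_def Rt_def by (simp add: add.assoc)
  have "Fv (Suc T) + (\<Sum>t<Suc T. Lt t) = (Fv (Suc T) + Lt T) + (\<Sum>t<T. Lt t)"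
    by (simp add: ac_simps)
  also have "\<dots> \<le> (Fv T + Rt T) + (\<Sum>t<T. Lt t)" by (rule add_right_mono[OF d])
  also have "\<dots> = (Fv T + (\<Sum>t<T. Lt t)) + Rt T" by (simp add: ac_simps)
  also have "\<dots> \<le> (Fv 0 + (\<Sum>t<T. Rt t)) + Rt T" by (rule add_right_mono[OF Suc.IH])
  also have "\<dots> = Fv 0 + (\<Sum>t<Suc T. Rt t)" by (simp add: ac_simps)
  finally show ?case .
qed

lemma coefpos: "0 < \<gamma> / 2 * (1 - L * \<gamma>)" using gpos Lg_le by simp

lemma Eq_fin_aux: "(\<And>s. s < t \<Longrightarrow> Bq s < \<infinity>) \<Longrightarrow> Eq t < \<infinity>"
proof -
  assume h: "\<And>s. s < t \<Longrightarrow> Bq s < \<infinity>"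
  have "\<forall>r\<in>{..<rr t}. Bq (kk t * B + r) < top"
  proof
    fix r assume "r \<in> {..<rr t}"
    then have "kk t * B + r < t" using kk_rr[of t] by simp
    then show "Bq (kk t * B + r) < top" using h by (simp add: infinity_ennreal_def)
  qed
  then have "(\<Sum>r<rr t. Bq (kk t * B + r)) < \<infinity>" by (simp add: infinity_ennreal_def)
  then have "ennreal (2 * L\<^sup>2 * \<gamma>\<^sup>2 * (real B - 1)) * (\<Sum>r<rr t. Bq (kk t * B + r))
     + ennreal (2 * L\<^sup>2 * \<gamma>\<^sup>2 * (real B - 1) * \<sigma>\<^sup>2) < \<infinity>"
    by (simp add: ennreal_mult_less_top)
  then show ?thesis using Eq_bound[of t] by (rule le_less_trans[rotated])
qed

lemma Bq_fin: "Bq t < \<infinity>"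
proof (induction t rule: less_induct)
  case (less t)
  have Ef: "Eq t' < \<infinity>" if "t' \<le> t" for t'
    using Eq_fin_aux[of t'] less that by simp
  have "\<forall>t'\<in>{..<Suc t}. Rt t' < top"
  proof
    fix t' assume "t' \<in> {..<Suc t}"
    then show "Rt t' < top" unfolding Rt_def using Ef[of t'] by (simp add: ennreal_mult_less_top infinity_ennreal_def)
  qed
  then have "(\<Sum>t'<Suc t. Rt t') < \<infinity>" by (simp add: infinity_ennreal_def)
  then have "Fv 0 + (\<Sum>t'<Suc t. Rt t') < \<infinity>" unfolding Fv0 by simp
  moreover have "ennreal (\<gamma> / 2 * (1 - L * \<gamma>)) * Bq t \<le> Fv (Suc t) + (\<Sum>t'<Suc t. Lt t')"
  proof -
    have "ennreal (\<gamma> / 2 * (1 - L * \<gamma>)) * Bq t \<le> Lt t" unfolding Lt_def by simp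
    also have "\<dots> \<le> (\<Sum>t'<Suc t. Lt t')" by (rule member_le_sum) auto
    also have "\<dots> \<le> Fv (Suc t) + (\<Sum>t'<Suc t. Lt t')" by simp
    finally show ?thesis .
  qed
  ultimately have "ennreal (\<gamma> / 2 * (1 - L * \<gamma>)) * Bq t < \<infinity>"
    using tele[of "Suc t"] by (meson le_less_trans)
  then show ?case using coefpos by (auto simp: ennreal_mult_less_top ennreal_mult_eq_top_iff top.not_eq_extremum)
qed

lemma Eq_fin: "Eq t < \<infinity>" using Eq_fin_aux Bq_fin by blast

lemma Aq_fin: "Aq t < \<infinity>"
proof -
  have "2 * Bq t + 2 * Eq t < \<infinity>" using Bq_fin[of t] Eq_fin[of t] by (simp add: ennreal_mult_less_top)
  then show ?thesis using Aq_bound[of t] by (rule le_less_trans[rotated])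
qed

definition "ra t = enn2real (Aq t)"
definition "rb t = enn2real (Bq t)"
definition "re t = enn2real (Eq t)"

lemma Aq_r: "Aq t = ennreal (ra t)" unfolding ra_def using Aq_fin[of t] by (simp add: ennreal_enn2real less_top)
lemma Bq_r: "Bq t = ennreal (rb t)" unfolding rb_def using Bq_fin[of t] by (simp add: ennreal_enn2real less_top)
lemma Eq_r: "Eq t = ennreal (re t)" unfolding re_def using Eq_fin[of t] by (simp add: ennreal_enn2real less_top)
lemma r0: "0 \<le> ra t" "0 \<le> rb t" "0 \<le> re t" unfolding ra_def rb_def re_def by auto

lemma R1: "\<gamma> / 2 * (\<Sum>t<K. ra t) + \<gamma> / 2 * (1 - L * \<gamma>) * (\<Sum>t<K. rb t)
    \<le> (f w0 - fstar) + \<gamma> / 2 * (\<Sum>t<K. re t) + real K * (L * \<gamma>\<^sup>2 * \<sigma>\<^sup>2 / 2)"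
proof -
  have c1: "0 \<le> \<gamma> / 2" using gpos by simp
  have c2: "0 \<le> \<gamma> / 2 * (1 - L * \<gamma>)" using coefpos by simp
  have c3: "0 \<le> L * \<gamma>\<^sup>2 * \<sigma>\<^sup>2 / 2" using Lpos by simp
  have Lr: "Lt t = ennreal (\<gamma> / 2 * ra t + \<gamma> / 2 * (1 - L * \<gamma>) * rb t)" for t
    unfolding Lt_def Aq_r Bq_r using c1 c2 r0[of t]
    by (simp add: ennreal_mult'[symmetric] ennreal_plus[symmetric] del: ennreal_plus)
  have Rr: "Rt t = ennreal (\<gamma> / 2 * re t + L * \<gamma>\<^sup>2 * \<sigma>\<^sup>2 / 2)" for t
    unfolding Rt_def Eq_r using c1 c3 r0[of t]
    by (simp add: ennreal_mult'[symmetric] ennreal_plus[symmetric] del: ennreal_plus)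
  have "(\<Sum>t<K. Lt t) \<le> Fv K + (\<Sum>t<K. Lt t)" by simp
  also have "\<dots> \<le> Fv 0 + (\<Sum>t<K. Rt t)" by (rule tele)
  finally have "ennreal (\<Sum>t<K. \<gamma> / 2 * ra t + \<gamma> / 2 * (1 - L * \<gamma>) * rb t)
      \<le> ennreal ((f w0 - fstar) + (\<Sum>t<K. \<gamma> / 2 * re t + L * \<gamma>\<^sup>2 * \<sigma>\<^sup>2 / 2))"
    unfolding Lr Rr Fv0 using c1 c2 c3 r0 lower
    by (subst (asm) sum_ennreal, force, subst (asm) sum_ennreal, force) (simp add: ennreal_plus[symmetric] sum_nonneg del: ennreal_plus)
  then have "(\<Sum>t<K. \<gamma> / 2 * ra t + \<gamma> / 2 * (1 - L * \<gamma>) * rb t)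
      \<le> (f w0 - fstar) + (\<Sum>t<K. \<gamma> / 2 * re t + L * \<gamma>\<^sup>2 * \<sigma>\<^sup>2 / 2)"
    using c1 c3 r0 lower by (subst (asm) ennreal_le_iff) (auto intro!: add_nonneg_nonneg sum_nonneg)
  then show ?thesis by (simp add: sum.distrib sum_distrib_left)
qed

lemma R2: "(\<Sum>t<K. ra t) \<le> 2 * (\<Sum>t<K. rb t) + 2 * (\<Sum>t<K. re t)"
proof -
  have "ra t \<le> 2 * rb t + 2 * re t" for t
  proof -
    have e: "2 * ennreal (rb t) + 2 * ennreal (re t) = ennreal (2 * rb t + 2 * re t)"
      using r0[of t] by (simp add: ennreal_plus ennreal_mult')
    have "ennreal (ra t) \<le> ennreal (2 * rb t + 2 * re t)"
      using Aq_bound[of t] unfolding Aq_r Bq_r Eq_r e .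
    then show ?thesis using r0[of t] by (subst (asm) ennreal_le_iff) auto
  qed
  then have "(\<Sum>t<K. ra t) \<le> (\<Sum>t<K. 2 * rb t + 2 * re t)" by (intro sum_mono) auto
  then show ?thesis by (simp add: sum.distrib sum_distrib_left)
qed

lemma R3: "(\<Sum>t<K. re t) \<le> 2 * L\<^sup>2 * \<gamma>\<^sup>2 * (real B - 1)\<^sup>2 * (\<Sum>t<K. rb t) + 2 * L\<^sup>2 * \<gamma>\<^sup>2 * (real B - 1) * real K * \<sigma>\<^sup>2"
proof -
  define K1 where "K1 = 2 * L\<^sup>2 * \<gamma>\<^sup>2 * (real B - 1)"
  have K1: "0 \<le> K1" unfolding K1_def using B_pos by simp
  have pt: "re t \<le> K1 * (\<Sum>r<rr t. rb (kk t * B + r)) + K1 * \<sigma>\<^sup>2" for t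
  proof -
    have "ennreal (re t) \<le> ennreal K1 * (\<Sum>r<rr t. ennreal (rb (kk t * B + r))) + ennreal (K1 * \<sigma>\<^sup>2)"
      using Eq_bound[of t] unfolding Eq_r Bq_r K1_def .
    also have "\<dots> = ennreal (K1 * (\<Sum>r<rr t. rb (kk t * B + r)) + K1 * \<sigma>\<^sup>2)"
      using K1 r0 by (simp add: sum_nonneg ennreal_mult'[symmetric] ennreal_plus[symmetric] del: ennreal_plus)
    finally show ?thesis using K1 r0 by (subst (asm) ennreal_le_iff) (auto intro!: add_nonneg_nonneg sum_nonneg mult_nonneg_nonneg)
  qed
  have "(\<Sum>t<K. re t) \<le> (\<Sum>t<K. K1 * (\<Sum>r<rr t. rb (kk t * B + r)) + K1 * \<sigma>\<^sup>2)"
    by (intro sum_mono pt)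
  also have "\<dots> = K1 * (\<Sum>t<K. \<Sum>r<t mod B. rb (t div B * B + r)) + real K * K1 * \<sigma>\<^sup>2"
    by (simp add: sum.distrib sum_distrib_left rr_def kk_def)
  also have "\<dots> \<le> K1 * ((real B - 1) * (\<Sum>t<K. rb t)) + real K * K1 * \<sigma>\<^sup>2"
    using comb_sum[of rb B K] r0 B_pos K1 by (intro add_right_mono mult_left_mono) auto
  finally show ?thesis unfolding K1_def by (simp add: power2_eq_square algebra_simps)
qed

end

theorem theoremE3:
  fixes f :: "'a::euclidean_space \<Rightarrow> real" and df :: "'a \<Rightarrow> 'a"
    and L fstar \<sigma> \<epsilon> :: real
    and D :: "'b measure" and g :: "'a \<Rightarrow> 'b \<Rightarrow> 'a"
    and n B K :: nat and M :: "nat \<Rightarrow> nat \<Rightarrow> nat" and w0 :: 'a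
  assumes diff: "\<forall>x. (f has_derivative (\<lambda>h. df x \<bullet> h)) (at x)"
    and smooth: "\<forall>x y. norm (df x - df y) \<le> L * norm (x - y)"
    and Lpos: "L > 0"
    and lower: "\<forall>x. fstar \<le> f x"
    and prob: "prob_space D"
    and meas: "case_prod g \<in> borel_measurable (borel \<Otimes>\<^sub>M D)"
    and unbiased: "\<forall>x. integrable D (g x) \<and> (\<integral>\<xi>. g x \<xi> \<partial>D) = df x"
    and variance: "\<forall>x. (\<integral>\<^sup>+\<xi>. ennreal ((norm (g x \<xi> - df x))\<^sup>2) \<partial>D) \<le> ennreal (\<sigma>\<^sup>2)"
    and n_pos: "n \<ge> 1" and B_pos: "B \<ge> 1"
    and Msum: "\<forall>k. (\<Sum>i<n. M k i) = B"
    and eps_pos: "\<epsilon> > 0"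
    and K_large: "real K \<ge> 4 * real B * L * (f w0 - fstar) / \<epsilon>
                           + 8 * \<sigma>\<^sup>2 * L * (f w0 - fstar) / \<epsilon>\<^sup>2"
  shows "ennreal (1 / real K) *
           (\<Sum>t<K. \<integral>\<^sup>+\<omega>. ennreal ((norm (df (main_branch g (lsgd_stepsize B L \<sigma> \<epsilon>) n M B w0 \<omega> t)))\<^sup>2)
                     \<partial>(PiM UNIV (\<lambda>_::nat \<times> nat \<times> nat. D)))
         \<le> ennreal \<epsilon>"
proof -
  define \<gamma> where "\<gamma> = lsgd_stepsize B L \<sigma> \<epsilon>"
  define a where "a = 1 / (2 * real B * L)"
  have Bp: "0 < real B" using B_pos by simp
  have a0: "0 < a" unfolding a_def using Bp Lpos by simp
  have s0: "0 \<le> \<sigma>\<^sup>2" by simp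
  have gcases: "(\<sigma>\<^sup>2 = 0 \<and> \<gamma> = a) \<or> (\<sigma>\<^sup>2 \<noteq> 0 \<and> \<gamma> = a \<and> a \<le> \<epsilon> / (4 * \<sigma>\<^sup>2 * L))
      \<or> (\<sigma>\<^sup>2 \<noteq> 0 \<and> \<gamma> = \<epsilon> / (4 * \<sigma>\<^sup>2 * L) \<and> \<epsilon> / (4 * \<sigma>\<^sup>2 * L) \<le> a)"
    unfolding \<gamma>_def lsgd_stepsize_def a_def by (auto simp: min_def)
  have gpos: "0 < \<gamma>" using gcases a0 eps_pos Lpos s0 by (auto intro!: divide_pos_pos)
  have gle_a: "\<gamma> \<le> a" using gcases by auto
  have gle: "2 * real B * L * \<gamma> \<le> 1"
  proof -
    have "2 * real B * L * \<gamma> \<le> 2 * real B * L * a" using gle_a Bp Lpos by (intro mult_left_mono) auto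
    also have "\<dots> = 1" unfolding a_def using Bp Lpos by simp
    finally show ?thesis .
  qed
  interpret lsgd f df L fstar \<sigma> D g n B M w0 \<gamma>
    using diff smooth Lpos lower prob meas unbiased variance n_pos B_pos Msum gpos gle by (rule lsgd.intro)
  have sumA: "(\<Sum>t<K. \<integral>\<^sup>+\<omega>. ennreal ((norm (df (main_branch g (lsgd_stepsize B L \<sigma> \<epsilon>) n M B w0 \<omega> t)))\<^sup>2)
                     \<partial>(PiM UNIV (\<lambda>_::nat \<times> nat \<times> nat. D))) = ennreal (\<Sum>t<K. ra t)"
  proof -
    have "(\<Sum>t<K. \<integral>\<^sup>+\<omega>. ennreal ((norm (df (main_branch g (lsgd_stepsize B L \<sigma> \<epsilon>) n M B w0 \<omega> t)))\<^sup>2)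
                     \<partial>(PiM UNIV (\<lambda>_::nat \<times> nat \<times> nat. D))) = (\<Sum>t<K. Aq t)"
      unfolding \<gamma>_def[symmetric] Aq_def xx_def ..
    also have "\<dots> = (\<Sum>t<K. ennreal (ra t))" by (simp only: Aq_r)
    also have "\<dots> = ennreal (\<Sum>t<K. ra t)" using r0 by simp
    finally show ?thesis .
  qed
  show ?thesis
  proof (cases "K = 0")
    case True then show ?thesis by simp
  next
    case False
    then have Kp: "0 < real K" by simp
    define \<Delta> where "\<Delta> = f w0 - fstar"
    define SA where "SA = (\<Sum>t<K. ra t)"
    define SB where "SB = (\<Sum>t<K. rb t)"
    define SE where "SE = (\<Sum>t<K. re t)"
    have SB0: "0 \<le> SB" unfolding SB_def using r0 by (simp add: sum_nonneg)
    have D0: "0 \<le> \<Delta>" unfolding \<Delta>_def using lower by simp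
    define u where "u = \<gamma> * L * real B"
    define v where "v = \<gamma> * L * \<sigma>\<^sup>2 / \<epsilon>"
    define p where "p = \<gamma> * L * (real B - 1)"
    define q where "q = \<gamma> * L"
    have "SA \<le> real K * \<epsilon>"
    proof -
      have "\<gamma> * SA \<le> \<gamma> * real K * \<epsilon>"
      proof (rule core_alg[where Y="\<gamma> * SB" and Z="\<gamma> * SE" and N="real K * \<gamma>\<^sup>2 * L * \<sigma>\<^sup>2"
            and \<Delta>=\<Delta> and u=u and v=v and p=p and q=q])
        show "0 \<le> \<gamma> * SB" using gpos SB0 by simp
        show "0 \<le> \<Delta>" by (rule D0)
        show "0 \<le> \<gamma> * real K * \<epsilon>" using gpos eps_pos by simp
        show "0 \<le> p" unfolding p_def using gpos Lpos B_pos by simp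
        show "0 \<le> q" unfolding q_def using gpos Lpos by simp
        show "p + q = u" unfolding p_def q_def u_def by (simp add: algebra_simps)
        show "u \<le> 1/2" unfolding u_def using gle by (simp add: algebra_simps)
        show "0 \<le> v" unfolding v_def using gpos Lpos eps_pos by simp
        show "v \<le> 1/4"
        proof (cases "\<sigma>\<^sup>2 = 0")
          case True then show ?thesis unfolding v_def by simp
        next
          case False
          then have sp: "0 < \<sigma>\<^sup>2" by simp
          have "\<gamma> \<le> \<epsilon> / (4 * \<sigma>\<^sup>2 * L)" using gcases False by auto
          then have "\<gamma> * (L * \<sigma>\<^sup>2) \<le> \<epsilon> / (4 * \<sigma>\<^sup>2 * L) * (L * \<sigma>\<^sup>2)"
            using sp Lpos by (intro mult_right_mono) auto
          also have "\<dots> = \<epsilon> / 4" using sp Lpos by (simp add: field_simps)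
          finally show ?thesis unfolding v_def using eps_pos by (simp add: field_simps)
        qed
        show "u = 1/2 \<or> v = 1/4"
        proof -
          have ua: "\<gamma> = a \<Longrightarrow> u = 1/2" unfolding u_def a_def using Bp Lpos by simp
          have vb: "\<sigma>\<^sup>2 \<noteq> 0 \<Longrightarrow> \<gamma> = \<epsilon> / (4 * \<sigma>\<^sup>2 * L) \<Longrightarrow> v = 1/4"
            unfolding v_def using Lpos eps_pos by (simp add: field_simps)
          show ?thesis using gcases ua vb by blast
        qed
        show "real K * \<gamma>\<^sup>2 * L * \<sigma>\<^sup>2 = v * (\<gamma> * real K * \<epsilon>)"
          unfolding v_def using eps_pos by (simp add: field_simps power2_eq_square)
        show "\<gamma> * SA + (1 - q) * (\<gamma> * SB) \<le> 2 * \<Delta> + \<gamma> * SE + real K * \<gamma>\<^sup>2 * L * \<sigma>\<^sup>2"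
        proof -
          have h: "\<gamma> / 2 * SA + \<gamma> / 2 * (1 - L * \<gamma>) * SB \<le> \<Delta> + \<gamma> / 2 * SE + real K * (L * \<gamma>\<^sup>2 * \<sigma>\<^sup>2 / 2)"
            using R1[of K] unfolding SA_def SB_def SE_def \<Delta>_def .
          have e1: "\<gamma> * SA + (1 - q) * (\<gamma> * SB) = 2 * (\<gamma> / 2 * SA + \<gamma> / 2 * (1 - L * \<gamma>) * SB)"
            unfolding q_def by (simp add: field_simps)
          have e2: "2 * \<Delta> + \<gamma> * SE + real K * \<gamma>\<^sup>2 * L * \<sigma>\<^sup>2 = 2 * (\<Delta> + \<gamma> / 2 * SE + real K * (L * \<gamma>\<^sup>2 * \<sigma>\<^sup>2 / 2))"
            by (simp add: algebra_simps)
          show ?thesis unfolding e1 e2 using h by (intro mult_left_mono) auto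
        qed
        show "\<gamma> * SA \<le> 2 * (\<gamma> * SB) + 2 * (\<gamma> * SE)"
        proof -
          have "\<gamma> * SA \<le> \<gamma> * (2 * SB + 2 * SE)"
            using R2[of K] gpos unfolding SA_def SB_def SE_def by (intro mult_left_mono) auto
          also have "\<dots> = 2 * (\<gamma> * SB) + 2 * (\<gamma> * SE)" by (simp add: algebra_simps)
          finally show ?thesis .
        qed
        show "\<gamma> * SE \<le> 2 * p\<^sup>2 * (\<gamma> * SB) + 2 * p * (real K * \<gamma>\<^sup>2 * L * \<sigma>\<^sup>2)"
        proof -
          have "\<gamma> * SE \<le> \<gamma> * (2 * L\<^sup>2 * \<gamma>\<^sup>2 * (real B - 1)\<^sup>2 * SB + 2 * L\<^sup>2 * \<gamma>\<^sup>2 * (real B - 1) * real K * \<sigma>\<^sup>2)"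
            using R3[of K] gpos unfolding SE_def SB_def by (intro mult_left_mono) auto
          also have "\<dots> = 2 * p\<^sup>2 * (\<gamma> * SB) + 2 * p * (real K * \<gamma>\<^sup>2 * L * \<sigma>\<^sup>2)"
            unfolding p_def by (simp add: algebra_simps power2_eq_square)
          finally show ?thesis .
        qed
        show "2 * \<Delta> * (2 * u + 4 * v) \<le> \<gamma> * real K * \<epsilon>"
        proof -
          have "\<gamma> * \<epsilon> * (4 * real B * L * \<Delta> / \<epsilon> + 8 * \<sigma>\<^sup>2 * L * \<Delta> / \<epsilon>\<^sup>2) \<le> \<gamma> * \<epsilon> * real K"
            using K_large gpos eps_pos unfolding \<Delta>_def by (intro mult_left_mono) auto
          moreover have "\<gamma> * \<epsilon> * (4 * real B * L * \<Delta> / \<epsilon> + 8 * \<sigma>\<^sup>2 * L * \<Delta> / \<epsilon>\<^sup>2) = 2 * \<Delta> * (2 * u + 4 * v)"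
            unfolding u_def v_def using eps_pos by (simp add: field_simps power2_eq_square)
          ultimately show ?thesis by (simp add: algebra_simps)
        qed
      qed
      then show ?thesis using gpos by (simp add: mult.assoc)
    qed
    then have "SA / real K \<le> \<epsilon>" using Kp by (simp add: divide_le_eq mult.commute)
    moreover have "ennreal (1 / real K) * ennreal SA = ennreal (SA / real K)"
      using Kp by (simp add: ennreal_mult'[symmetric])
    ultimately show ?thesis unfolding sumA SA_def[symmetric] by (simp add: ennreal_leI)
  qed
qed

end
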